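(* Let $n$ be a positive integer and $k$ an even integer with $n/2+1\le k\le n-1$. If $G$ is a graph with $H_{n,k}\subseteq G\subseteq H'_{n,k}$, then $G$ is a core.
   Context: $H_{n,k}$ is the graph on the even-weight elements of $\mathbb{Z}_2^n$ with $x\sim y$ iff the Hamming distance $d(x,y)=k$; $H'_{n,k}$ is the graph on the same vertex set with $x\sim y$ iff $d(x,y)\ge k$; $G$ has this vertex set and edge set between those of $H_{n,k}$ and $H'_{n,k}$. A graph is a core if every homomorphism (adjacency-preserving map) from it to itself is an automorphism. *)

theory Defs
  imports Complex_Main
begin

text \<open>Elements of Z_2^n are represented by their supports, i.e. subsets of {0..<n};
  the Hamming distance is the size of the symmetric difference.\<close>

definition even_cube :: "nat \<Rightarrow> nat set set" where
  "even_cube n = {x. x \<subseteq> {..<n} \<and> even (card x)}"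

definition hamming :: "nat set \<Rightarrow> nat set \<Rightarrow> nat" where
  "hamming x y = card ((x - y) \<union> (y - x))"

definition is_graph :: "'a set \<Rightarrow> ('a \<Rightarrow> 'a \<Rightarrow> bool) \<Rightarrow> bool" where
  "is_graph V E \<longleftrightarrow> (\<forall>x\<in>V. \<forall>y\<in>V. E x y \<longrightarrow> E y x) \<and> (\<forall>x\<in>V. \<not> E x x)"

definition graph_hom :: "'a set \<Rightarrow> ('a \<Rightarrow> 'a \<Rightarrow> bool) \<Rightarrow> 'b set \<Rightarrow> ('b \<Rightarrow> 'b \<Rightarrow> bool) \<Rightarrow> ('a \<Rightarrow> 'b) \<Rightarrow> bool" where
  "graph_hom V E W F f \<longleftrightarrow> f ` V \<subseteq> W \<and> (\<forall>x\<in>V. \<forall>y\<in>V. E x y \<longrightarrow> F (f x) (f y))"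

definition graph_aut :: "'a set \<Rightarrow> ('a \<Rightarrow> 'a \<Rightarrow> bool) \<Rightarrow> ('a \<Rightarrow> 'a) \<Rightarrow> bool" where
  "graph_aut V E f \<longleftrightarrow> bij_betw f V V \<and> (\<forall>x\<in>V. \<forall>y\<in>V. E x y \<longleftrightarrow> E (f x) (f y))"

definition is_core :: "'a set \<Rightarrow> ('a \<Rightarrow> 'a \<Rightarrow> bool) \<Rightarrow> bool" where
  "is_core V E \<longleftrightarrow> (\<forall>f. graph_hom V E V E f \<longrightarrow> graph_aut V E f)"

end

theory Submission
  imports Defs
begin

definition sd :: "'a set \<Rightarrow> 'a set \<Rightarrow> 'a set" where
  "sd u v = (u - v) \<union> (v - u)"

lemma card_sd_parity:
  assumes "finite A" "finite B"
  shows "card A + card B = card (sd A B) + 2 * card (A \<inter> B)"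
proof -
  have "card (sd A B) = card (A - B) + card (B - A)"
    unfolding sd_def using assms by (intro card_Un_disjoint) auto
  moreover have "card A = card (A \<inter> B) + card (A - B)" using assms card_Int_Diff by blast
  moreover have "card B = card (B \<inter> A) + card (B - A)" using assms card_Int_Diff by blast
  moreover have "B \<inter> A = A \<inter> B" by auto
  ultimately show ?thesis by simp
qed

lemma neg1_sd:
  assumes "finite A" "finite B"
  shows "(-1::real) ^ card (sd A B) = (-1) ^ card A * (-1) ^ card B"
proof -
  have "(-1::real) ^ (card A + card B) = (-1) ^ card (sd A B)"
    using card_sd_parity[OF assms] by (simp add: power_add power_mult)
  then show ?thesis by (simp add: power_add)
qed

definition KS :: "'a set \<Rightarrow> nat \<Rightarrow> 'a set \<Rightarrow> real" where
  "KS A m W = (\<Sum>s\<in>{s. s \<subseteq> A \<and> card s = m}. (-1) ^ card (s \<inter> W))"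

lemma KS_rec:
  assumes fin: "finite A" and x: "x \<in> A"
  shows "KS A (Suc m) W = KS (A - {x}) (Suc m) (W - {x}) + (if x \<in> W then -1 else 1) * KS (A - {x}) m (W - {x})"
proof -
  let ?P = "{s. s \<subseteq> A - {x} \<and> card s = Suc m}"
  let ?Q = "{s. s \<subseteq> A - {x} \<and> card s = m}"
  have finA': "finite (A - {x})" using fin by auto
  have eq: "{s. s \<subseteq> A \<and> card s = Suc m} = ?P \<union> insert x ` ?Q"
  proof (rule set_eqI, rule iffI)
    fix s assume "s \<in> {s. s \<subseteq> A \<and> card s = Suc m}"
    hence s: "s \<subseteq> A" "card s = Suc m" by auto
    show "s \<in> ?P \<union> insert x ` ?Q"
    proof (cases "x \<in> s")
      case True
      have "finite s" using s fin finite_subset by blast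
      hence "card (s - {x}) = m" using s True by simp
      moreover have "s = insert x (s - {x})" using True by auto
      ultimately show ?thesis using s by blast
    next
      case False thus ?thesis using s by auto
    qed
  next
    fix s assume "s \<in> ?P \<union> insert x ` ?Q"
    thus "s \<in> {s. s \<subseteq> A \<and> card s = Suc m}"
    proof
      assume "s \<in> ?P" thus ?thesis by auto
    next
      assume "s \<in> insert x ` ?Q"
      then obtain t where t: "t \<subseteq> A - {x}" "card t = m" "s = insert x t" by auto
      have "finite t" using t finA' finite_subset by blast
      have "x \<notin> t" using t by auto
      thus ?thesis using t x \<open>finite t\<close> by auto
    qed
  qed
  have disj: "?P \<inter> insert x ` ?Q = {}" by auto
  have finP: "finite ?P" by (rule finite_subset[of _ "Pow (A - {x})"]) (use finA' in auto)
  have finQ: "finite ?Q" by (rule finite_subset[of _ "Pow (A - {x})"]) (use finA' in auto)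
  have inj: "inj_on (insert x) ?Q" unfolding inj_on_def by blast
  have "KS A (Suc m) W = (\<Sum>s\<in>?P. (-1) ^ card (s \<inter> W)) + (\<Sum>s\<in>insert x ` ?Q. (-1) ^ card (s \<inter> W))"
    unfolding KS_def eq by (rule sum.union_disjoint[OF finP finite_imageI[OF finQ] disj])
  also have "(\<Sum>s\<in>?P. (-1::real) ^ card (s \<inter> W)) = KS (A - {x}) (Suc m) (W - {x})"
    unfolding KS_def proof (rule sum.cong[OF refl])
    fix s assume "s \<in> ?P"
    hence "x \<notin> s" by blast
    hence "s \<inter> W = s \<inter> (W - {x})" by blast
    thus "(-1::real) ^ card (s \<inter> W) = (-1) ^ card (s \<inter> (W - {x}))" by simp
  qed
  also have "(\<Sum>s\<in>insert x ` ?Q. (-1::real) ^ card (s \<inter> W)) = (\<Sum>s\<in>?Q. (-1) ^ card (insert x s \<inter> W))"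
    using inj by (simp add: sum.reindex)
  also have "\<dots> = (if x \<in> W then -1 else 1) * KS (A - {x}) m (W - {x})"
    unfolding KS_def sum_distrib_left
  proof (rule sum.cong[OF refl])
    fix s assume "s \<in> ?Q"
    hence sx: "x \<notin> s" and "s \<subseteq> A - {x}" by blast+
    hence fs: "finite s" using finite_subset[OF _ finA'] by blast
    have e1: "card (s \<inter> (W - {x})) = card (s \<inter> W)" using sx by (metis Diff_empty Diff_insert0 Int_Diff Int_iff)
    show "(-1::real) ^ card (insert x s \<inter> W) = (if x \<in> W then -1 else 1) * (-1) ^ card (s \<inter> (W - {x}))"
    proof (cases "x \<in> W")
      case True
      have "insert x s \<inter> W = insert x (s \<inter> W)" using True by blast
      moreover have "x \<notin> s \<inter> W" using sx by blast
      ultimately have "card (insert x s \<inter> W) = Suc (card (s \<inter> W))" using fs by simp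
      thus ?thesis using True by (simp only: e1) simp
    next
      case False
      hence "insert x s \<inter> W = s \<inter> W" by blast
      thus ?thesis using False by (simp only: e1) simp
    qed
  qed
  finally show ?thesis .
qed

lemma subsets_card_finite: "finite A \<Longrightarrow> finite {s. s \<subseteq> A \<and> card s = m}"
  by (rule finite_subset[of _ "Pow A"]) auto

lemma KS_empty: "finite A \<Longrightarrow> KS A m {} = real (card A choose m)"
  unfolding KS_def by (simp add: n_subsets)

lemma KS_zero: assumes "finite A" shows "KS A 0 W = 1"
proof -
  have "{s. s \<subseteq> A \<and> card s = 0} = {{}}"
  proof (rule set_eqI, rule iffI)
    fix s assume "s \<in> {s. s \<subseteq> A \<and> card s = 0}"
    hence "s \<subseteq> A" "card s = 0" by blast+
    moreover hence "finite s" using assms finite_subset by blast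
    ultimately show "s \<in> {{}}" by simp
  qed simp
  thus ?thesis unfolding KS_def by simp
qed

lemma KS_compl_m:
  assumes fin: "finite A" and W: "W \<subseteq> A" and m: "m \<le> card A"
  shows "KS A (card A - m) W = (-1) ^ card W * KS A m W"
proof -
  let ?S = "{s. s \<subseteq> A \<and> card s = m}"
  let ?T = "{s. s \<subseteq> A \<and> card s = card A - m}"
  have bij: "bij_betw (\<lambda>s. A - s) ?S ?T"
  proof (rule bij_betw_byWitness[where f' = "\<lambda>s. A - s"])
    show "\<forall>a\<in>?S. A - (A - a) = a" by blast
    show "\<forall>a\<in>?T. A - (A - a) = a" by blast
    show "(\<lambda>s. A - s) ` ?S \<subseteq> ?T"
    proof
      fix t assume "t \<in> (\<lambda>s. A - s) ` ?S"
      then obtain s where s: "s \<subseteq> A" "card s = m" "t = A - s" by blast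
      have "card (A - s) = card A - card s" using s fin finite_subset card_Diff_subset by metis
      thus "t \<in> ?T" using s by blast
    qed
    show "(\<lambda>s. A - s) ` ?T \<subseteq> ?S"
    proof
      fix t assume "t \<in> (\<lambda>s. A - s) ` ?T"
      then obtain s where s: "s \<subseteq> A" "card s = card A - m" "t = A - s" by blast
      have "card (A - s) = card A - card s" using s fin finite_subset card_Diff_subset by metis
      hence "card (A - s) = m" using s m by linarith
      thus "t \<in> ?S" using s by blast
    qed
  qed
  have "KS A (card A - m) W = (\<Sum>s\<in>?S. (-1) ^ card ((A - s) \<inter> W))"
    unfolding KS_def using sum.reindex_bij_betw[OF bij, of "\<lambda>t. (-1::real) ^ card (t \<inter> W)"] by simp
  also have "\<dots> = (\<Sum>s\<in>?S. (-1) ^ card W * (-1) ^ card (s \<inter> W))"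
  proof (rule sum.cong[OF refl])
    fix s assume "s \<in> ?S"
    hence sA: "s \<subseteq> A" by blast
    have fW: "finite W" using W fin finite_subset by blast
    have e: "(A - s) \<inter> W = W - (s \<inter> W)" using W by blast
    have c: "card ((A - s) \<inter> W) + card (s \<inter> W) = card W"
      unfolding e using fW by (metis Int_lower2 card_Diff_subset card_mono finite_Int le_add_diff_inverse2)
    have "(-1::real) ^ card W = (-1) ^ card ((A - s) \<inter> W) * (-1) ^ card (s \<inter> W)"
      using c by (metis power_add)
    hence "(-1::real) ^ card W * (-1) ^ card (s \<inter> W) = (-1) ^ card ((A - s) \<inter> W) * ((-1) ^ card (s \<inter> W))^2"
      by (simp add: power2_eq_square)
    also have "\<dots> = (-1) ^ card ((A - s) \<inter> W)" by (simp add: power_even_eq[symmetric] flip: power_mult)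
    finally show "(-1::real) ^ card ((A - s) \<inter> W) = (-1) ^ card W * (-1) ^ card (s \<inter> W)" by simp
  qed
  also have "\<dots> = (-1) ^ card W * KS A m W" unfolding KS_def by (simp add: sum_distrib_left)
  finally show ?thesis .
qed

lemma KS_compl_W:
  assumes fin: "finite A" and W: "W \<subseteq> A"
  shows "KS A m (A - W) = (-1) ^ m * KS A m W"
  unfolding KS_def sum_distrib_left
proof (rule sum.cong[OF refl])
  fix s assume "s \<in> {s. s \<subseteq> A \<and> card s = m}"
  hence sA: "s \<subseteq> A" and cs: "card s = m" by blast+
  have fs: "finite s" using sA fin finite_subset by blast
  have e: "s \<inter> (A - W) = s - (s \<inter> W)" using sA by blast
  have c: "card (s \<inter> (A - W)) + card (s \<inter> W) = m"
    unfolding e using fs cs by (metis Int_lower1 card_Diff_subset card_mono finite_Int le_add_diff_inverse2)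
  have "(-1::real) ^ m = (-1) ^ card (s \<inter> (A - W)) * (-1) ^ card (s \<inter> W)"
    using c by (metis power_add)
  hence "(-1::real) ^ m * (-1) ^ card (s \<inter> W) = (-1) ^ card (s \<inter> (A - W)) * ((-1) ^ card (s \<inter> W))^2"
    by (simp add: power2_eq_square)
  also have "\<dots> = (-1) ^ card (s \<inter> (A - W))" by (simp add: power_even_eq[symmetric] flip: power_mult)
  finally show "(-1::real) ^ card (s \<inter> (A - W)) = (-1) ^ m * (-1) ^ card (s \<inter> W)" by simp
qed

lemma KS_vanish:
  assumes fin: "finite A" and W: "W \<subseteq> A" and c: "card A = 2 * m" and o: "odd (card W)"
  shows "KS A m W = 0"
proof -
  have "m \<le> card A" using c by simp
  hence "KS A (card A - m) W = (-1) ^ card W * KS A m W" by (rule KS_compl_m[OF fin W])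
  moreover have "card A - m = m" using c by simp
  moreover have "(-1::real) ^ card W = -1" using o by simp
  ultimately have "KS A m W = - KS A m W" by simp
  thus ?thesis by simp
qed

lemma binom_id1: "real n * real ((n - 1) choose m) = (real n - real m) * real (n choose m)"
proof (cases "m \<le> n")
  case True
  have "(n - m) * (n choose m) = n * ((n - 1) choose m)" by (rule binomial_absorb_comp)
  hence "real ((n - m) * (n choose m)) = real (n * ((n - 1) choose m))" by simp
  thus ?thesis using True by (simp add: of_nat_diff)
next
  case False
  thus ?thesis by (simp add: binomial_eq_0)
qed

lemma binom_id2: "real n * real ((n - 1) choose m) = real (Suc m) * real (n choose Suc m)"
proof -
  have "Suc m * (n choose Suc m) = n * ((n - 1) choose m)" by (rule binomial_absorption)
  hence h: "real (Suc m * (n choose Suc m)) = real (n * ((n - 1) choose m))" by simp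
  show ?thesis by (simp only: of_nat_mult[symmetric] h)
qed

lemma KS_single:
  assumes fin: "finite A" and x: "x \<in> A"
  shows "real (card A) * KS A m {x} = real (card A choose m) * (real (card A) - 2 * real m)"
proof (cases m)
  case 0
  thus ?thesis using KS_zero[OF fin] by simp
next
  case (Suc m')
  have fin': "finite (A - {x})" using fin by blast
  have cA: "card (A - {x}) = card A - 1" using x fin by simp
  have "KS A m {x} = KS (A - {x}) (Suc m') {} - KS (A - {x}) m' {}"
    using KS_rec[OF fin x, of m' "{x}"] Suc by simp
  also have "\<dots> = real ((card A - 1) choose Suc m') - real ((card A - 1) choose m')"
    using KS_empty[OF fin'] cA by simp
  finally have e: "KS A m {x} = real ((card A - 1) choose Suc m') - real ((card A - 1) choose m')" .
  have "real (card A) * KS A m {x} = (real (card A) - real (Suc m')) * real (card A choose Suc m') - real (Suc m') * real (card A choose Suc m')"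
    unfolding e right_diff_distrib binom_id1[of "card A" "Suc m'"] binom_id2[of "card A" m'] by simp
  thus ?thesis using Suc by (simp add: algebra_simps)
qed

lemma KS_bound:
  assumes "finite A" "W \<subseteq> A" "W \<noteq> {}" "W \<noteq> A" "2 * m < card A"
  shows "real (card A) * \<bar>KS A m W\<bar> \<le> real (card A choose m) * (real (card A) - 2 * real m)"
  using assms
proof (induction "card A" arbitrary: A W m rule: less_induct)
  case less
  note fin = less.prems(1) and WA = less.prems(2) and Wne = less.prems(3) and WnA = less.prems(4)
    and mn = less.prems(5)
  define n where "n = card A"
  show ?case
  proof (cases m)
    case 0
    thus ?thesis using KS_zero[OF fin] by simp
  next
    case (Suc m')
    have fW: "finite W" using WA fin finite_subset by blast
    have cW1: "card W \<ge> 1" using Wne fW by (simp add: Suc_leI card_gt_0_iff)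
    have "W \<subset> A" using WA WnA by blast
    hence cWn: "card W < n" unfolding n_def using fin psubset_card_mono by blast
    have single: "real n * \<bar>KS A m V\<bar> \<le> real (n choose m) * (real n - 2 * real m)"
      if "card V = 1" "V \<subseteq> A" for V
    proof -
      obtain y where y: "V = {y}" using \<open>card V = 1\<close> card_1_singletonE by blast
      have yA: "y \<in> A" using y that by blast
      have "real n * KS A m V = real (n choose m) * (real n - 2 * real m)"
        unfolding n_def y by (rule KS_single[OF fin yA])
      moreover have "real n - 2 * real m \<ge> 0" using mn n_def by simp
      ultimately have "\<bar>real n * KS A m V\<bar> = real (n choose m) * (real n - 2 * real m)"
        by simp
      thus ?thesis by (simp add: abs_mult)
    qed
    show ?thesis
    proof (cases "card W = 1")
      case True thus ?thesis using single WA n_def by simp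
    next
      case c1: False
      show ?thesis
      proof (cases "card W = n - 1")
        case True
        have "card (A - W) = 1" using card_Diff_subset[OF fW WA] True n_def cWn by simp
        moreover have "A - (A - W) = W" using WA by blast
        moreover have "KS A m (A - (A - W)) = (-1) ^ m * KS A m (A - W)"
          by (rule KS_compl_W[OF fin]) blast
        ultimately have "\<bar>KS A m W\<bar> = \<bar>KS A m (A - W)\<bar>" by (simp add: abs_mult)
        thus ?thesis using single[of "A - W"] \<open>card (A - W) = 1\<close> n_def by simp
      next
        case cn1: False
        have cW2: "card W \<ge> 2" using c1 cW1 by linarith
        have cWn2: "card W \<le> n - 2" using cn1 cWn by linarith
        have n3: "n \<ge> 3" using mn Suc n_def by linarith
        have recx: "KS A m W = KS (A - {x}) m (W - {x}) + (if x \<in> W then -1 else 1) * KS (A - {x}) m' (W - {x})"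
          if "x \<in> A" for x using KS_rec[OF fin that] Suc by simp
        have cA': "card (A - {x}) = n - 1" if "x \<in> A" for x using that fin n_def by simp
        have lt: "card (A - {x}) < card A" if "x \<in> A" for x using cA' that n_def n3 by simp
        have id1: "real n * real ((n - 1) choose m) = (real n - real m) * real (n choose m)"
          by (rule binom_id1)
        have id2: "real n * real ((n - 1) choose m') = real m * real (n choose m)"
          using binom_id2[of n m'] Suc by simp
        show ?thesis
        proof (cases "2 * m < n - 1")
          case True
          obtain x where xW: "x \<in> W" using Wne by blast
          have xA: "x \<in> A" using xW WA by blast
          have fW': "card (W - {x}) = card W - 1" using xW fW by simp
          have W'1: "W - {x} \<subseteq> A - {x}" using WA by blast
          have W'2: "W - {x} \<noteq> {}" using fW' cW2 by fastforce
          have W'3: "W - {x} \<noteq> A - {x}" using WnA WA xW by blast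
          have IH1: "real (n - 1) * \<bar>KS (A - {x}) m (W - {x})\<bar> \<le> real ((n - 1) choose m) * (real (n - 1) - 2 * real m)"
          proof -
            have "2 * m < card (A - {x})" using cA'[OF xA] True by simp
            from less.hyps[OF lt[OF xA] _ W'1 W'2 W'3 this] show ?thesis using fin cA'[OF xA] by simp
          qed
          have IH2: "real (n - 1) * \<bar>KS (A - {x}) m' (W - {x})\<bar> \<le> real ((n - 1) choose m') * (real (n - 1) - 2 * real m')"
          proof -
            have "2 * m' < card (A - {x})" using cA'[OF xA] True Suc by simp
            from less.hyps[OF lt[OF xA] _ W'1 W'2 W'3 this] show ?thesis using fin cA'[OF xA] by simp
          qed
          have "\<bar>KS A m W\<bar> \<le> \<bar>KS (A - {x}) m (W - {x})\<bar> + \<bar>KS (A - {x}) m' (W - {x})\<bar>"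
            using recx[OF xA] xW by simp
          hence "real n * real (n - 1) * \<bar>KS A m W\<bar> \<le> real n * real (n - 1) * (\<bar>KS (A - {x}) m (W - {x})\<bar> + \<bar>KS (A - {x}) m' (W - {x})\<bar>)"
            by (rule mult_left_mono) simp_all
          also have "\<dots> = real n * (real (n - 1) * \<bar>KS (A - {x}) m (W - {x})\<bar>) + real n * (real (n - 1) * \<bar>KS (A - {x}) m' (W - {x})\<bar>)"
            by (simp only: distrib_left mult.assoc)
          also have "\<dots> \<le> real n * (real ((n - 1) choose m) * (real (n - 1) - 2 * real m)) + real n * (real ((n - 1) choose m') * (real (n - 1) - 2 * real m'))"
            by (rule add_mono[OF mult_left_mono[OF IH1] mult_left_mono[OF IH2]]) simp_all
          also have "\<dots> = (real n - real m) * real (n choose m) * (real (n - 1) - 2 * real m) + real m * real (n choose m) * (real (n - 1) - 2 * real m')"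
            using id1 id2 by (simp add: mult.assoc[symmetric])
          also have "\<dots> = real (n - 1) * (real (n choose m) * (real n - 2 * real m))"
            using Suc n3 by (simp add: of_nat_diff algebra_simps)
          finally have "real (n - 1) * (real n * \<bar>KS A m W\<bar>) \<le> real (n - 1) * (real (n choose m) * (real n - 2 * real m))"
            by (simp add: algebra_simps)
          hence "real n * \<bar>KS A m W\<bar> \<le> real (n choose m) * (real n - 2 * real m)"
            using n3 by (simp add: mult_le_cancel_left_pos)
          thus ?thesis using n_def by simp
        next
          case False
          hence nm: "n = 2 * m + 1" using mn n_def by linarith
          obtain x where xA: "x \<in> A" and oW': "odd (card (W - {x}))"
          proof (cases "even (card W)")
            case True
            obtain x where xW: "x \<in> W" using Wne by blast
            have "card (W - {x}) = card W - 1" using xW fW by simp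
            hence "odd (card (W - {x}))" using True cW1 by simp
            thus ?thesis using that xW WA by blast
          next
            case False
            obtain x where xA: "x \<in> A" "x \<notin> W" using WA WnA by blast
            hence "W - {x} = W" by blast
            thus ?thesis using that xA False by simp
          qed
          have W'1: "W - {x} \<subseteq> A - {x}" using WA by blast
          have W'2: "W - {x} \<noteq> {}"
          proof
            assume h: "W - {x} = {}"
            have "card (W - {x}) = 0" by (simp only: h card.empty)
            thus False using oW' by simp
          qed
          have cA'x: "card (A - {x}) = 2 * m" using cA'[OF xA] nm by simp
          have W'3: "W - {x} \<noteq> A - {x}"
          proof
            assume "W - {x} = A - {x}" thus False using oW' cA'x by simp
          qed
          have v: "KS (A - {x}) m (W - {x}) = 0"
            using KS_vanish[OF _ W'1 cA'x oW'] fin by simp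
          have IH2: "real (n - 1) * \<bar>KS (A - {x}) m' (W - {x})\<bar> \<le> real ((n - 1) choose m') * (real (n - 1) - 2 * real m')"
          proof -
            have "2 * m' < card (A - {x})" using cA'[OF xA] nm Suc by simp
            from less.hyps[OF lt[OF xA] _ W'1 W'2 W'3 this] show ?thesis using fin cA'[OF xA] by simp
          qed
          have e: "\<bar>KS A m W\<bar> = \<bar>KS (A - {x}) m' (W - {x})\<bar>"
            using recx[OF xA] v by (simp add: abs_mult)
          have "real (n - 1) * (real n * \<bar>KS A m W\<bar>) = real n * (real (n - 1) * \<bar>KS (A - {x}) m' (W - {x})\<bar>)"
            unfolding e by simp
          also have "\<dots> \<le> real n * (real ((n - 1) choose m') * (real (n - 1) - 2 * real m'))"
            using IH2 by (intro mult_left_mono) auto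
          also have "\<dots> = real m * real (n choose m) * (real (n - 1) - 2 * real m')"
            using id2 by (simp add: mult.assoc[symmetric])
          also have "\<dots> = real (n - 1) * (real (n choose m) * (real n - 2 * real m))"
            using Suc nm by (simp add: algebra_simps)
          finally have "real (n - 1) * (real n * \<bar>KS A m W\<bar>) \<le> real (n - 1) * (real (n choose m) * (real n - 2 * real m))" .
          hence "real n * \<bar>KS A m W\<bar> \<le> real (n choose m) * (real n - 2 * real m)"
            using nm Suc by (simp add: mult_le_cancel_left_pos)
          thus ?thesis using n_def by simp
        qed
      qed
    qed
  qed
qed

lemma binom_alg:
  assumes "n \<ge> 1"
  shows "real n * (real ((n - 1) choose Suc m') * (real (n - 1) - 2 * real (Suc m'))) + real n * (real ((n - 1) choose m') * (real (n - 1) - 2 * real m'))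
     = real (n - 1) * (real (n choose Suc m') * (real n - 2 * real (Suc m')))"
proof -
  have id1: "real n * real ((n - 1) choose Suc m') = (real n - real (Suc m')) * real (n choose Suc m')"
    by (rule binom_id1)
  have id2: "real n * real ((n - 1) choose m') = real (Suc m') * real (n choose Suc m')"
    using binom_id2[of n m'] by simp
  have "real n * (real ((n - 1) choose Suc m') * (real (n - 1) - 2 * real (Suc m'))) + real n * (real ((n - 1) choose m') * (real (n - 1) - 2 * real m'))
     = (real n - real (Suc m')) * real (n choose Suc m') * (real (n - 1) - 2 * real (Suc m')) + real (Suc m') * real (n choose Suc m') * (real (n - 1) - 2 * real m')"
    using id1 id2 by (simp add: mult.assoc[symmetric])
  also have "\<dots> = real (n - 1) * (real (n choose Suc m') * (real n - 2 * real (Suc m')))"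
    using assms by (simp add: of_nat_diff algebra_simps)
  finally show ?thesis .
qed

lemma KS_one:
  assumes fin: "finite A" and W: "W \<subseteq> A"
  shows "KS A 1 W = real (card A) - 2 * real (card W)"
proof -
  have e: "{s. s \<subseteq> A \<and> card s = 1} = (\<lambda>a. {a}) ` A"
  proof (rule set_eqI, rule iffI)
    fix s assume "s \<in> {s. s \<subseteq> A \<and> card s = 1}"
    then obtain a where "s = {a}" "a \<in> A" by (auto simp: card_1_singleton_iff)
    thus "s \<in> (\<lambda>a. {a}) ` A" by blast
  qed auto
  have inj: "inj_on (\<lambda>a. {a}) A" by (simp add: inj_on_def)
  have "KS A 1 W = (\<Sum>a\<in>A. (-1) ^ card ({a} \<inter> W))"
    unfolding KS_def e using inj by (simp add: sum.reindex)
  also have "\<dots> = (\<Sum>a\<in>A. if a \<in> W then -1 else 1)"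
    by (rule sum.cong[OF refl]) simp
  also have "\<dots> = (\<Sum>a\<in>A \<inter> {a. a \<in> W}. -1) + (\<Sum>a\<in>A \<inter> - {a. a \<in> W}. 1)"
    by (rule sum.If_cases[OF fin])
  also have "A \<inter> {a. a \<in> W} = W" using W by blast
  also have "A \<inter> - {a. a \<in> W} = A - W" by blast
  finally have "KS A 1 W = (\<Sum>a\<in>W. -1) + (\<Sum>a\<in>A - W. 1)" .
  moreover have "card (A - W) = card A - card W" using card_Diff_subset[OF finite_subset[OF W fin] W] .
  ultimately show ?thesis using card_mono[OF fin W] by (simp add: of_nat_diff)
qed

lemma KS_card2_strict:
  assumes fin: "finite A" and W: "W \<subseteq> A" and c2: "card W = 2" and m1: "m \<ge> 1"
    and mn: "2 * m + 2 \<le> card A"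
  shows "real (card A) * \<bar>KS A m W\<bar> < real (card A choose m) * (real (card A) - 2 * real m)"
proof -
  define n where "n = card A"
  obtain m' where m: "m = Suc m'" using m1 by (cases m) auto
  obtain x y where xy: "W = {x, y}" "x \<noteq> y" using c2[unfolded card_2_iff] by blast
  have xA: "x \<in> A" using W unfolding xy(1) by blast
  have yA: "y \<in> A - {x}" using W xy(2) unfolding xy(1) by blast
  have fin': "finite (A - {x})" using fin by blast
  have cA': "card (A - {x}) = n - 1" using xA fin n_def by simp
  have Wx: "W - {x} = {y}" unfolding xy(1) using xy(2) by blast
  have xW: "x \<in> W" using xy by blast
  have "KS A (Suc m') W = KS (A - {x}) (Suc m') (W - {x}) + (if x \<in> W then -1 else 1) * KS (A - {x}) m' (W - {x})"
    by (rule KS_rec[OF fin xA])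
  hence r: "KS A m W = KS (A - {x}) m {y} - KS (A - {x}) m' {y}"
    unfolding Wx m[symmetric] using xW by simp
  have s1: "real (n - 1) * KS (A - {x}) m {y} = real ((n - 1) choose m) * (real (n - 1) - 2 * real m)"
    using KS_single[OF fin' yA, of m] cA' by simp
  have s2: "real (n - 1) * KS (A - {x}) m' {y} = real ((n - 1) choose m') * (real (n - 1) - 2 * real m')"
    using KS_single[OF fin' yA, of m'] cA' by simp
  have n1: "real (n - 1) > 0" using mn n_def by simp
  have h1: "2 * m < n - 1" using mn n_def by linarith
  hence "real (2 * m) < real (n - 1)" by (simp only: of_nat_less_iff)
  hence h2: "real (n - 1) - 2 * real m > 0" by simp
  have "m' < m" using m by simp
  hence "real (2 * m') < real (n - 1)" using h1 by (simp only: of_nat_less_iff)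
  hence h3: "real (n - 1) - 2 * real m' > 0" by simp
  have "(n - 1) choose m > 0" using h1 by simp
  hence p1: "real ((n - 1) choose m) * (real (n - 1) - 2 * real m) > 0" using h2 by simp
  have "(n - 1) choose m' > 0" using h1 m by simp
  hence p2: "real ((n - 1) choose m') * (real (n - 1) - 2 * real m') > 0" using h3 by simp
  have "real (n - 1) * KS (A - {x}) m {y} > 0" using p1 unfolding s1[symmetric] .
  hence K1: "KS (A - {x}) m {y} > 0" using n1 by (simp add: zero_less_mult_iff)
  have "real (n - 1) * KS (A - {x}) m' {y} > 0" using p2 unfolding s2[symmetric] .
  hence K2: "KS (A - {x}) m' {y} > 0" using n1 by (simp add: zero_less_mult_iff)
  have "\<bar>KS A m W\<bar> < KS (A - {x}) m {y} + KS (A - {x}) m' {y}" using r K1 K2 by linarith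
  hence "real n * real (n - 1) * \<bar>KS A m W\<bar> < real n * real (n - 1) * (KS (A - {x}) m {y} + KS (A - {x}) m' {y})"
    by (rule mult_strict_left_mono) (use n1 mn n_def in simp_all)
  also have "\<dots> = real n * (real (n - 1) * KS (A - {x}) m {y}) + real n * (real (n - 1) * KS (A - {x}) m' {y})"
    by (simp only: distrib_left mult.assoc)
  also have "\<dots> = real n * (real ((n - 1) choose m) * (real (n - 1) - 2 * real m)) + real n * (real ((n - 1) choose m') * (real (n - 1) - 2 * real m'))"
    by (simp only: s1 s2)
  also have "\<dots> = real (n - 1) * (real (n choose m) * (real n - 2 * real m))"
    unfolding m by (rule binom_alg) (use mn n_def in simp)
  finally have "real (n - 1) * (real n * \<bar>KS A m W\<bar>) < real (n - 1) * (real (n choose m) * (real n - 2 * real m))"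
    by (simp only: mult_ac)
  hence "real n * \<bar>KS A m W\<bar> < real (n choose m) * (real n - 2 * real m)"
    using n1 by (simp add: mult_less_cancel_left_pos)
  thus ?thesis using n_def by simp
qed

lemma KS_strict:
  assumes "finite A" "W \<subseteq> A" "2 \<le> card W" "card W + 2 \<le> card A" "1 \<le> m" "2 * m + 2 \<le> card A"
  shows "real (card A) * \<bar>KS A m W\<bar> < real (card A choose m) * (real (card A) - 2 * real m)"
  using assms
proof (induction "card A" arbitrary: A W m rule: less_induct)
  case less
  note fin = less.prems(1) and WA = less.prems(2) and cW2 = less.prems(3) and cWn = less.prems(4)
    and m1 = less.prems(5) and mn = less.prems(6)
  define n where "n = card A"
  have fW: "finite W" using WA fin finite_subset by blast
  show ?case
  proof (cases "m = 1")
    case True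
    have e: "KS A m W = real n - 2 * real (card W)" using KS_one[OF fin WA] True n_def by simp
    have "\<bar>real n - 2 * real (card W)\<bar> \<le> real n - 4" using cW2 cWn n_def by linarith
    hence "\<bar>KS A m W\<bar> < real n - 2" unfolding e by linarith
    hence "real n * \<bar>KS A m W\<bar> < real n * (real n - 2)" using mn n_def by (intro mult_strict_left_mono) auto
    thus ?thesis using True n_def by simp
  next
    case False
    then obtain m' where m: "m = Suc m'" and m'1: "m' \<ge> 1" using m1 by (cases m) auto
    show ?thesis
    proof (cases "card W = 2")
      case True thus ?thesis using KS_card2_strict[OF fin WA True m1 mn] by simp
    next
      case c2: False
      show ?thesis
      proof (cases "card W + 2 = n")
        case True
        have cc: "card (A - W) = 2" using card_Diff_subset[OF fW WA] True n_def by simp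
        have "A - (A - W) = W" using WA by blast
        moreover have "KS A m (A - (A - W)) = (-1) ^ m * KS A m (A - W)"
          by (rule KS_compl_W[OF fin]) blast
        ultimately have "\<bar>KS A m W\<bar> = \<bar>KS A m (A - W)\<bar>" by (simp add: abs_mult)
        moreover have "A - W \<subseteq> A" by blast
        ultimately show ?thesis using KS_card2_strict[OF fin _ cc m1 mn] by simp
      next
        case cn: False
        obtain x where xW: "x \<in> W" using cW2 by (metis card.empty ex_in_conv not_numeral_le_zero)
        have xA: "x \<in> A" using xW WA by blast
        have fin': "finite (A - {x})" using fin by blast
        have cA': "card (A - {x}) = n - 1" using xA fin n_def by simp
        have lt: "card (A - {x}) < card A" using cA' n_def mn by simp
        have cW': "card (W - {x}) = card W - 1" using xW fW by simp
        have W'1: "W - {x} \<subseteq> A - {x}" using WA by blast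
        have "card (W - {x}) \<ge> 1" using cW' cW2 by simp
        hence W'2: "W - {x} \<noteq> {}" by (metis card.empty not_one_le_zero)
        have W'3: "W - {x} \<noteq> A - {x}"
        proof
          assume "W - {x} = A - {x}"
          hence "card (W - {x}) = card (A - {x})" by simp
          thus False using cW' cA' cWn n_def cW2 by simp
        qed
        have "KS A (Suc m') W = KS (A - {x}) (Suc m') (W - {x}) + (if x \<in> W then -1 else 1) * KS (A - {x}) m' (W - {x})"
          by (rule KS_rec[OF fin xA])
        hence r: "KS A m W = KS (A - {x}) m (W - {x}) - KS (A - {x}) m' (W - {x})"
          unfolding m[symmetric] using xW by simp
        have B1: "real (n - 1) * \<bar>KS (A - {x}) m (W - {x})\<bar> \<le> real ((n - 1) choose m) * (real (n - 1) - 2 * real m)"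
        proof -
          have "2 * m < card (A - {x})" using cA' mn n_def by simp
          from KS_bound[OF fin' W'1 W'2 W'3 this] show ?thesis using cA' by simp
        qed
        have B2: "real (n - 1) * \<bar>KS (A - {x}) m' (W - {x})\<bar> < real ((n - 1) choose m') * (real (n - 1) - 2 * real m')"
        proof -
          have a1: "2 \<le> card (W - {x})" using cW' cW2 c2 by simp
          have a2: "card (W - {x}) + 2 \<le> card (A - {x})" using cW' cA' cWn cn n_def cW2 by simp
          have a3: "2 * m' + 2 \<le> card (A - {x})" using cA' mn m n_def by simp
          from less.hyps[OF lt fin' W'1 a1 a2 m'1 a3] show ?thesis using cA' by simp
        qed
        have "\<bar>KS A m W\<bar> \<le> \<bar>KS (A - {x}) m (W - {x})\<bar> + \<bar>KS (A - {x}) m' (W - {x})\<bar>"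
          using r by simp
        hence "real n * real (n - 1) * \<bar>KS A m W\<bar> \<le> real n * real (n - 1) * (\<bar>KS (A - {x}) m (W - {x})\<bar> + \<bar>KS (A - {x}) m' (W - {x})\<bar>)"
          by (rule mult_left_mono) simp_all
        also have "\<dots> = real n * (real (n - 1) * \<bar>KS (A - {x}) m (W - {x})\<bar>) + real n * (real (n - 1) * \<bar>KS (A - {x}) m' (W - {x})\<bar>)"
          by (simp only: distrib_left mult.assoc)
        also have "\<dots> < real n * (real ((n - 1) choose m) * (real (n - 1) - 2 * real m)) + real n * (real ((n - 1) choose m') * (real (n - 1) - 2 * real m'))"
          by (rule add_le_less_mono[OF mult_left_mono[OF B1] mult_strict_left_mono[OF B2]]) (use mn n_def in simp_all)
        also have "\<dots> = real (n - 1) * (real (n choose m) * (real n - 2 * real m))"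
          unfolding m by (rule binom_alg) (use mn n_def in simp)
        finally have "real (n - 1) * (real n * \<bar>KS A m W\<bar>) < real (n - 1) * (real (n choose m) * (real n - 2 * real m))"
          by (simp only: mult_ac)
        hence "real n * \<bar>KS A m W\<bar> < real (n choose m) * (real n - 2 * real m)"
          using mn n_def by (simp add: mult_less_cancel_left_pos)
        thus ?thesis using n_def by simp
      qed
    qed
  qed
qed


definition chi :: "nat set \<Rightarrow> nat set \<Rightarrow> real" where
  "chi w u = (-1) ^ card (u \<inter> w)"

lemma chi_comm: "chi w u = chi u w"
  unfolding chi_def by (simp add: Int_commute)

lemma chi_empty[simp]: "chi w {} = 1" "chi {} u = 1"
  unfolding chi_def by simp_all

lemma chi_sq: "chi w u * chi w u = 1"
  unfolding chi_def by (simp flip: power_add add: power_mult[symmetric] mult_2[symmetric])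

lemma sd_Int: "sd u v \<inter> w = sd (u \<inter> w) (v \<inter> w)"
  unfolding sd_def by blast

lemma chi_sd:
  assumes "finite u" "finite v"
  shows "chi w (sd u v) = chi w u * chi w v"
  unfolding chi_def sd_Int using assms by (intro neg1_sd) auto

lemma chi_sd2:
  assumes "finite u"
  shows "chi (sd w w') u = chi w u * chi w' u"
proof -
  have e: "u \<inter> sd w w' = sd (u \<inter> w) (u \<inter> w')" unfolding sd_def by blast
  show ?thesis unfolding chi_def e using assms by (intro neg1_sd) auto
qed

lemma sd_sym: "sd u v = sd v u" unfolding sd_def by blast
lemma sd_self_left: "sd u (sd u s) = s" unfolding sd_def by blast
lemma sd_empty_iff: "sd u v = {} \<longleftrightarrow> u = v" unfolding sd_def by blast
lemma sd_subset: "u \<subseteq> N \<Longrightarrow> v \<subseteq> N \<Longrightarrow> sd u v \<subseteq> N" unfolding sd_def by blast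

lemma sd_inv_Pow: "c \<in> N \<Longrightarrow> bij_betw (\<lambda>w. sd w {c}) (Pow N) (Pow N)"
  by (rule bij_betw_byWitness[where f' = "\<lambda>w. sd w {c}"]) (auto simp: sd_def)

lemma orth:
  assumes "finite N" "z \<subseteq> N"
  shows "(\<Sum>w\<in>Pow N. chi w z) = (if z = {} then 2 ^ card N else 0)"
proof (cases "z = {}")
  case True
  thus ?thesis using assms by (simp add: card_Pow)
next
  case False
  then obtain c where cz: "c \<in> z" by blast
  hence cN: "c \<in> N" using assms by blast
  have fz: "finite z" using assms finite_subset by blast
  let ?S = "\<Sum>w\<in>Pow N. chi w z"
  have "?S = (\<Sum>w\<in>Pow N. chi (sd w {c}) z)"
    using sum.reindex_bij_betw[OF sd_inv_Pow[OF cN], of "\<lambda>w. chi w z"] by simp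
  also have "\<dots> = (\<Sum>w\<in>Pow N. - chi w z)"
  proof (rule sum.cong[OF refl])
    fix w assume "w \<in> Pow N"
    have "chi {c} z = -1" unfolding chi_def using cz by (simp add: Int_absorb1)
    thus "chi (sd w {c}) z = - chi w z" using chi_sd2[OF fz, of w "{c}"] by simp
  qed
  also have "\<dots> = - ?S" by (simp add: sum_negf)
  finally have "?S = 0" by simp
  thus ?thesis using False by simp
qed

definition fh :: "nat set \<Rightarrow> (nat set \<Rightarrow> real) \<Rightarrow> nat set \<Rightarrow> real" where
  "fh N g w = (\<Sum>u\<in>Pow N. g u * chi w u)"

lemma delta_sum:
  assumes fin: "finite N" and u: "u \<in> Pow N" and s: "s \<in> Pow N"
  shows "(\<Sum>v\<in>Pow N. g v * (\<Sum>w\<in>Pow N. chi w u * chi w v * chi w s)) = 2 ^ card N * g (sd u s)"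
proof -
  have fu: "finite u" and fs: "finite s" using u s fin finite_subset by auto
  have "(\<Sum>v\<in>Pow N. g v * (\<Sum>w\<in>Pow N. chi w u * chi w v * chi w s))
      = (\<Sum>v\<in>Pow N. g v * (if v = sd u s then 2 ^ card N else 0))"
  proof (rule sum.cong[OF refl])
    fix v assume v: "v \<in> Pow N"
    have fv: "finite v" using v fin finite_subset by auto
    have "(\<Sum>w\<in>Pow N. chi w u * chi w v * chi w s) = (\<Sum>w\<in>Pow N. chi w (sd (sd u v) s))"
      using chi_sd fu fv fs by (simp add: sd_def)
    also have "\<dots> = (if sd (sd u v) s = {} then 2 ^ card N else 0)"
      by (rule orth[OF fin]) (use u v s in \<open>auto simp: sd_def\<close>)
    also have "(sd (sd u v) s = {}) = (v = sd u s)" unfolding sd_def by blast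
    finally show "g v * (\<Sum>w\<in>Pow N. chi w u * chi w v * chi w s) = g v * (if v = sd u s then 2 ^ card N else 0)"
      by simp
  qed
  also have "\<dots> = (\<Sum>v\<in>Pow N. if v = sd u s then g v * 2 ^ card N else 0)"
    by (rule sum.cong[OF refl]) simp
  also have "\<dots> = g (sd u s) * 2 ^ card N"
  proof -
    have "sd u s \<in> Pow N" using u s by (auto simp: sd_def)
    thus ?thesis using fin by (simp add: sum.delta')
  qed
  finally show ?thesis by simp
qed

lemma quad_identity:
  assumes fin: "finite N" and T: "T \<subseteq> Pow N"
  shows "(\<Sum>w\<in>Pow N. (fh N g w)^2 * (\<Sum>s\<in>T. chi w s)) = 2 ^ card N * (\<Sum>u\<in>Pow N. \<Sum>s\<in>T. g u * g (sd u s))"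
proof -
  let ?U = "Pow N"
  define F where "F u v s w = g u * g v * (chi w u * chi w v * chi w s)" for u v s w
  have "(\<Sum>w\<in>?U. (fh N g w)^2 * (\<Sum>s\<in>T. chi w s)) = (\<Sum>w\<in>?U. \<Sum>s\<in>T. \<Sum>u\<in>?U. \<Sum>v\<in>?U. F u v s w)"
  proof (rule sum.cong[OF refl])
    fix w
    have "(fh N g w)^2 * (\<Sum>s\<in>T. chi w s) = (\<Sum>s\<in>T. chi w s * ((\<Sum>u\<in>?U. g u * chi w u) * (\<Sum>v\<in>?U. g v * chi w v)))"
      unfolding fh_def power2_eq_square by (simp add: sum_distrib_right mult.commute)
    also have "\<dots> = (\<Sum>s\<in>T. \<Sum>u\<in>?U. \<Sum>v\<in>?U. F u v s w)"
    proof (rule sum.cong[OF refl])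
      fix s
      have "chi w s * ((\<Sum>u\<in>?U. g u * chi w u) * (\<Sum>v\<in>?U. g v * chi w v)) = chi w s * (\<Sum>u\<in>?U. \<Sum>v\<in>?U. (g u * chi w u) * (g v * chi w v))"
        by (simp only: sum_product)
      also have "\<dots> = (\<Sum>u\<in>?U. \<Sum>v\<in>?U. chi w s * ((g u * chi w u) * (g v * chi w v)))"
        by (simp only: sum_distrib_left)
      also have "\<dots> = (\<Sum>u\<in>?U. \<Sum>v\<in>?U. F u v s w)"
        unfolding F_def by (simp only: mult_ac)
      finally show "chi w s * ((\<Sum>u\<in>?U. g u * chi w u) * (\<Sum>v\<in>?U. g v * chi w v)) = (\<Sum>u\<in>?U. \<Sum>v\<in>?U. F u v s w)" .
    qed
    finally show "(fh N g w)^2 * (\<Sum>s\<in>T. chi w s) = (\<Sum>s\<in>T. \<Sum>u\<in>?U. \<Sum>v\<in>?U. F u v s w)" .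
  qed
  also have "\<dots> = (\<Sum>s\<in>T. \<Sum>w\<in>?U. \<Sum>u\<in>?U. \<Sum>v\<in>?U. F u v s w)" by (rule sum.swap)
  also have "\<dots> = (\<Sum>s\<in>T. \<Sum>u\<in>?U. \<Sum>w\<in>?U. \<Sum>v\<in>?U. F u v s w)"
    by (rule sum.cong[OF refl], rule sum.swap)
  also have "\<dots> = (\<Sum>s\<in>T. \<Sum>u\<in>?U. \<Sum>v\<in>?U. \<Sum>w\<in>?U. F u v s w)"
    by (rule sum.cong[OF refl], rule sum.cong[OF refl], rule sum.swap)
  also have "\<dots> = (\<Sum>u\<in>?U. \<Sum>s\<in>T. \<Sum>v\<in>?U. \<Sum>w\<in>?U. F u v s w)" by (rule sum.swap)
  also have "\<dots> = (\<Sum>u\<in>?U. \<Sum>s\<in>T. g u * (2 ^ card N * g (sd u s)))"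
  proof (rule sum.cong[OF refl], rule sum.cong[OF refl])
    fix u s assume u: "u \<in> ?U" and s: "s \<in> T"
    have "(\<Sum>v\<in>?U. \<Sum>w\<in>?U. F u v s w) = g u * (\<Sum>v\<in>?U. g v * (\<Sum>w\<in>?U. chi w u * chi w v * chi w s))"
      unfolding F_def sum_distrib_left by (simp add: mult_ac)
    also have "\<dots> = g u * (2 ^ card N * g (sd u s))"
      using delta_sum[OF fin u, of s g] s T by auto
    finally show "(\<Sum>v\<in>?U. \<Sum>w\<in>?U. F u v s w) = g u * (2 ^ card N * g (sd u s))" .
  qed
  also have "\<dots> = 2 ^ card N * (\<Sum>u\<in>?U. \<Sum>s\<in>T. g u * g (sd u s))"
    by (simp add: sum_distrib_left mult_ac)
  finally show ?thesis .
qed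

lemma parseval:
  assumes fin: "finite N"
  shows "(\<Sum>w\<in>Pow N. (fh N g w)^2) = 2 ^ card N * (\<Sum>u\<in>Pow N. (g u)^2)"
  using quad_identity[OF fin, of "{{}}" g] by (simp add: sd_def power2_eq_square)

lemma inversion:
  assumes fin: "finite N" and u: "u \<in> Pow N"
  shows "(\<Sum>w\<in>Pow N. fh N g w * chi w u) = 2 ^ card N * g u"
proof -
  have "(\<Sum>w\<in>Pow N. fh N g w * chi w u) = (\<Sum>w\<in>Pow N. \<Sum>v\<in>Pow N. g v * (chi w u * chi w v * chi w {}))"
    unfolding fh_def sum_distrib_right by (simp add: mult_ac)
  also have "\<dots> = (\<Sum>v\<in>Pow N. \<Sum>w\<in>Pow N. g v * (chi w u * chi w v * chi w {}))" by (rule sum.swap)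
  also have "\<dots> = (\<Sum>v\<in>Pow N. g v * (\<Sum>w\<in>Pow N. chi w u * chi w v * chi w {}))"
    by (simp add: sum_distrib_left)
  also have "\<dots> = 2 ^ card N * g (sd u {})" by (rule delta_sum[OF fin u]) simp
  finally show ?thesis by (simp add: sd_def)
qed


lemma KS_final_aux:
  assumes ev: "even k" and nk: "n + 2 \<le> 2 * k" and kn: "k \<le> n - 1" and w: "w \<subseteq> {..<n}"
  shows "real n * KS {..<n} k w \<ge> real (n choose k) * (real n - 2 * real k)
    \<and> (card w \<noteq> 1 \<and> card w \<noteq> n - 1 \<longrightarrow> real n * KS {..<n} k w > real (n choose k) * (real n - 2 * real k))"
proof -
  let ?N = "{..<n}"
  define m where "m = n - k"
  have fin: "finite ?N" by simp
  have cN: "card ?N = n" by simp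
  have n2: "n \<ge> 2" using nk kn by linarith
  have m1: "m \<ge> 1" and mk: "k = n - m" and mn: "2 * m + 2 \<le> n" and mle: "m \<le> n"
    using kn nk n2 unfolding m_def by linarith+
  have Cn: "n choose m = n choose k" using mk mle by (simp add: binomial_symmetric[symmetric])
  have Cpos: "real (n choose k) > 0" using kn by simp
  have rel: "KS ?N k w = (-1) ^ card w * KS ?N m w"
    using KS_compl_m[OF fin w, of m] cN mle mk by simp
  have absrel: "\<bar>KS ?N k w\<bar> = \<bar>KS ?N m w\<bar>" using rel by (simp add: abs_mult)
  have mnk: "real n - 2 * real m = 2 * real k - real n" using mk mle by (simp add: of_nat_diff)
  show ?thesis
  proof (cases "w = {} \<or> w = ?N")
    case True
    have "KS ?N k w = real (n choose k)"
    proof (cases "w = {}")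
      case True thus ?thesis using KS_empty[OF fin] by simp
    next
      case False
      hence wN: "w = ?N" using \<open>w = {} \<or> w = ?N\<close> by blast
      have "KS ?N k (?N - {}) = (-1) ^ k * KS ?N k {}" by (rule KS_compl_W[OF fin]) simp
      thus ?thesis using wN KS_empty[OF fin] ev by simp
    qed
    moreover have "real n * real (n choose k) > real (n choose k) * (real n - 2 * real k)"
      using Cpos kn nk by (simp add: algebra_simps)
    ultimately show ?thesis by simp
  next
    case False
    hence wne: "w \<noteq> {}" and wnN: "w \<noteq> ?N" by auto
    have b: "real n * \<bar>KS ?N m w\<bar> \<le> real (n choose m) * (real n - 2 * real m)"
      using KS_bound[OF fin w wne wnN] cN mn by simp
    have "- \<bar>KS ?N k w\<bar> \<le> KS ?N k w" by linarith
    hence "real n * (- \<bar>KS ?N k w\<bar>) \<le> real n * KS ?N k w" by (rule mult_left_mono) simp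
    hence low: "real n * KS ?N k w \<ge> - (real n * \<bar>KS ?N m w\<bar>)"
      using absrel by simp
    have b': "real n * \<bar>KS ?N m w\<bar> \<le> real (n choose k) * (2 * real k - real n)"
      using b unfolding Cn mnk .
    have neg: "real (n choose k) * (real n - 2 * real k) = - (real (n choose k) * (2 * real k - real n))"
      by (simp add: algebra_simps)
    have "real n * KS ?N k w \<ge> real (n choose k) * (real n - 2 * real k)"
      using low b' neg by linarith
    moreover have "real n * KS ?N k w > real (n choose k) * (real n - 2 * real k)"
      if c1: "card w \<noteq> 1" and c2: "card w \<noteq> n - 1"
    proof -
      have fw: "finite w" using finite_subset[OF w] by simp
      have "card w \<ge> 1" using wne fw by (simp add: Suc_leI card_gt_0_iff)
      hence cw2: "card w \<ge> 2" using c1 by linarith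
      have "w \<subset> ?N" using w wnN by blast
      hence "card w < card ?N" by (rule psubset_card_mono[OF fin])
      hence "card w < n" by simp
      hence cw3: "card w + 2 \<le> n" using c2 by linarith
      have "real n * \<bar>KS ?N m w\<bar> < real (n choose m) * (real n - 2 * real m)"
        using KS_strict[OF fin w] cw2 cw3 m1 mn cN by simp
      hence "real n * \<bar>KS ?N m w\<bar> < real (n choose k) * (2 * real k - real n)"
        unfolding Cn mnk .
      thus ?thesis using low neg by linarith
    qed
    ultimately show ?thesis by blast
  qed
qed

lemma KS_chi: "KS N k w = (\<Sum>s\<in>{s. s \<subseteq> N \<and> card s = k}. chi w s)"
  unfolding KS_def chi_def by simp

lemma spec_main:
  assumes ev: "even k" and nk: "n + 2 \<le> 2 * k" and kn: "k \<le> n - 1"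
  shows "(\<Sum>w\<in>Pow {..<n}. (fh {..<n} g w)^2 * (real n * KS {..<n} k w - real (n choose k) * (real n - 2 * real k)))
       = 2 ^ n * (real n * (\<Sum>u\<in>Pow {..<n}. \<Sum>s\<in>{s. s \<subseteq> {..<n} \<and> card s = k}. g u * g (sd u s))
                 - real (n choose k) * (real n - 2 * real k) * (\<Sum>u\<in>Pow {..<n}. (g u)^2))"
proof -
  let ?N = "{..<n}"
  let ?c = "real (n choose k) * (real n - 2 * real k)"
  have q: "(\<Sum>w\<in>Pow ?N. (fh ?N g w)^2 * KS ?N k w) = 2 ^ n * (\<Sum>u\<in>Pow ?N. \<Sum>s\<in>{s. s \<subseteq> ?N \<and> card s = k}. g u * g (sd u s))"
    unfolding KS_chi using quad_identity[of ?N "{s. s \<subseteq> ?N \<and> card s = k}" g] by auto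
  have p: "(\<Sum>w\<in>Pow ?N. (fh ?N g w)^2) = 2 ^ n * (\<Sum>u\<in>Pow ?N. (g u)^2)"
    using parseval[of ?N g] by simp
  have "(\<Sum>w\<in>Pow ?N. (fh ?N g w)^2 * (real n * KS ?N k w - ?c))
      = real n * (\<Sum>w\<in>Pow ?N. (fh ?N g w)^2 * KS ?N k w) - ?c * (\<Sum>w\<in>Pow ?N. (fh ?N g w)^2)"
    by (simp add: right_diff_distrib sum_subtractf sum_distrib_left mult_ac)
  also have "\<dots> = 2 ^ n * (real n * (\<Sum>u\<in>Pow ?N. \<Sum>s\<in>{s. s \<subseteq> ?N \<and> card s = k}. g u * g (sd u s)) - ?c * (\<Sum>u\<in>Pow ?N. (g u)^2))"
    unfolding q p by (simp add: algebra_simps)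
  finally show ?thesis .
qed

lemma spec_ge:
  assumes ev: "even k" and nk: "n + 2 \<le> 2 * k" and kn: "k \<le> n - 1"
  shows "real n * (\<Sum>u\<in>Pow {..<n}. \<Sum>s\<in>{s. s \<subseteq> {..<n} \<and> card s = k}. g u * g (sd u s))
     \<ge> real (n choose k) * (real n - 2 * real k) * (\<Sum>u\<in>Pow {..<n}. (g u)^2)"
proof -
  have "0 \<le> (\<Sum>w\<in>Pow {..<n}. (fh {..<n} g w)^2 * (real n * KS {..<n} k w - real (n choose k) * (real n - 2 * real k)))"
    using KS_final_aux[OF ev nk kn] by (intro sum_nonneg mult_nonneg_nonneg) auto
  moreover have "(0::real) < 2 ^ n" by simp
  ultimately show ?thesis unfolding spec_main[OF ev nk kn] by (simp add: zero_le_mult_iff)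
qed

lemma spec_eq:
  assumes ev: "even k" and nk: "n + 2 \<le> 2 * k" and kn: "k \<le> n - 1"
    and eq: "real n * (\<Sum>u\<in>Pow {..<n}. \<Sum>s\<in>{s. s \<subseteq> {..<n} \<and> card s = k}. g u * g (sd u s))
     = real (n choose k) * (real n - 2 * real k) * (\<Sum>u\<in>Pow {..<n}. (g u)^2)"
    and w: "w \<in> Pow {..<n}" "card w \<noteq> 1" "card w \<noteq> n - 1"
  shows "fh {..<n} g w = 0"
proof -
  let ?D = "\<lambda>w. real n * KS {..<n} k w - real (n choose k) * (real n - 2 * real k)"
  have s0: "(\<Sum>w\<in>Pow {..<n}. (fh {..<n} g w)^2 * ?D w) = 0"
    unfolding spec_main[OF ev nk kn] eq by simp
  have nn: "\<forall>w\<in>Pow {..<n}. 0 \<le> (fh {..<n} g w)^2 * ?D w"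
    using KS_final_aux[OF ev nk kn] by (auto intro!: mult_nonneg_nonneg)
  have "(fh {..<n} g w)^2 * ?D w = 0"
    using sum_nonneg_eq_0_iff[of "Pow {..<n}" "\<lambda>w. (fh {..<n} g w)^2 * ?D w"] s0 nn w(1) by simp
  moreover have "?D w > 0" using KS_final_aux[OF ev nk kn, of w] w by simp
  ultimately show ?thesis by simp
qed


lemma even_cube_Pow: "even_cube n = {u \<in> Pow {..<n}. even (card u)}"
  unfolding even_cube_def by blast

lemma chi_N_Ev: "u \<subseteq> {..<n} \<Longrightarrow> chi {..<n} u = (-1) ^ card u"
  unfolding chi_def by (simp add: Int_absorb2)

lemma sum_Ev: "(\<Sum>u\<in>even_cube n. h u) = (\<Sum>u\<in>Pow {..<n}. h u * ((1 + chi {..<n} u) / 2))"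
proof -
  have "(\<Sum>u\<in>even_cube n. h u) = (\<Sum>u\<in>Pow {..<n}. if even (card u) then h u else 0)"
    unfolding even_cube_Pow by (rule sum.inter_filter) simp
  also have "\<dots> = (\<Sum>u\<in>Pow {..<n}. h u * ((1 + chi {..<n} u) / 2))"
  proof (rule sum.cong[OF refl])
    fix u assume "u \<in> Pow {..<n}"
    hence "chi {..<n} u = (-1) ^ card u" using chi_N_Ev by blast
    thus "(if even (card u) then h u else 0) = h u * ((1 + chi {..<n} u) / 2)" by simp
  qed
  finally show ?thesis .
qed

lemma EvSum:
  assumes n1: "n \<ge> 1" and z: "z \<subseteq> {..<n}"
  shows "(\<Sum>u\<in>even_cube n. chi z u) = (if z = {} \<or> z = {..<n} then 2 ^ (n - 1) else 0)"
proof -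
  let ?N = "{..<n}"
  have "(\<Sum>u\<in>even_cube n. chi z u) = (\<Sum>u\<in>Pow ?N. (chi u z + chi u (sd z ?N)) / 2)"
    unfolding sum_Ev
  proof (rule sum.cong[OF refl])
    fix u assume u: "u \<in> Pow ?N"
    hence fu: "finite u" using finite_subset by auto
    have "chi (sd z ?N) u = chi z u * chi ?N u" by (rule chi_sd2[OF fu])
    thus "chi z u * ((1 + chi ?N u) / 2) = (chi u z + chi u (sd z ?N)) / 2"
      by (simp add: chi_comm[of u] algebra_simps)
  qed
  also have "\<dots> = ((\<Sum>u\<in>Pow ?N. chi u z) + (\<Sum>u\<in>Pow ?N. chi u (sd z ?N))) / 2"
    by (simp only: sum.distrib[symmetric] sum_divide_distrib)
  also have "(\<Sum>u\<in>Pow ?N. chi u z) = (if z = {} then 2 ^ n else 0)"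
    using orth[of ?N z] z by simp
  also have "(\<Sum>u\<in>Pow ?N. chi u (sd z ?N)) = (if sd z ?N = {} then 2 ^ n else 0)"
  proof -
    have "sd z ?N \<subseteq> ?N" by (rule sd_subset[OF z]) simp
    from orth[OF _ this] show ?thesis by simp
  qed
  also have "(sd z ?N = {}) = (z = ?N)" by (simp add: sd_empty_iff)
  finally have res: "(\<Sum>u\<in>even_cube n. chi z u) = ((if z = {} then 2 ^ n else 0) + (if z = ?N then 2 ^ n else 0)) / 2" .
  have "0 \<in> ?N" using n1 by simp
  hence ne: "?N \<noteq> {}" by blast
  show ?thesis unfolding res using n1 ne
    by (cases "z = {}"; cases "z = ?N") (auto simp: power_eq_if)
qed

lemma chi_co_single:
  assumes v: "v \<in> even_cube n" and e: "e \<in> {..<n}"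
  shows "chi ({..<n} - {e}) v = chi {e} v"
proof -
  have vN: "v \<subseteq> {..<n}" and ev: "even (card v)" using v unfolding even_cube_def by auto
  have fv: "finite v" using finite_subset[OF vN] by simp
  have "{..<n} - {e} = sd {..<n} {e}" using e unfolding sd_def by blast
  hence "chi ({..<n} - {e}) v = chi {..<n} v * chi {e} v" using chi_sd2[OF fv] by simp
  also have "chi {..<n} v = 1" using chi_N_Ev[OF vN] ev by simp
  finally show ?thesis by simp
qed

lemma fh_co_single:
  assumes g0: "\<forall>u\<in>Pow {..<n}. u \<notin> even_cube n \<longrightarrow> g u = 0" and e: "e \<in> {..<n}"
  shows "fh {..<n} g ({..<n} - {e}) = fh {..<n} g {e}"
  unfolding fh_def
proof (rule sum.cong[OF refl])
  fix v assume v: "v \<in> Pow {..<n}"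
  show "g v * chi ({..<n} - {e}) v = g v * chi {e} v"
  proof (cases "v \<in> even_cube n")
    case True thus ?thesis using chi_co_single[OF True e] by simp
  next
    case False thus ?thesis using g0 v by simp
  qed
qed

lemma repr:
  assumes n3: "n \<ge> 3" and g0: "\<forall>u\<in>Pow {..<n}. u \<notin> even_cube n \<longrightarrow> g u = 0"
    and fz: "\<forall>w\<in>Pow {..<n}. card w \<noteq> 1 \<and> card w \<noteq> n - 1 \<longrightarrow> fh {..<n} g w = 0"
    and u: "u \<in> even_cube n"
  shows "2 ^ n * g u = 2 * (\<Sum>e\<in>{..<n}. fh {..<n} g {e} * chi {e} u)"
proof -
  let ?N = "{..<n}"
  let ?W1 = "(\<lambda>e. {e}) ` ?N"
  let ?W2 = "(\<lambda>e. ?N - {e}) ` ?N"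
  let ?F = "\<lambda>w. fh ?N g w * chi w u"
  have uP: "u \<in> Pow ?N" using u unfolding even_cube_def by auto
  have "2 ^ n * g u = (\<Sum>w\<in>Pow ?N. ?F w)" using inversion[OF _ uP, of g] by simp
  also have "\<dots> = (\<Sum>w\<in>?W1 \<union> ?W2. ?F w)"
  proof (rule sum.mono_neutral_right)
    show "finite (Pow ?N)" by simp
    show "?W1 \<union> ?W2 \<subseteq> Pow ?N" by blast
    show "\<forall>w\<in>Pow ?N - (?W1 \<union> ?W2). ?F w = 0"
    proof
      fix w assume w: "w \<in> Pow ?N - (?W1 \<union> ?W2)"
      hence wN: "w \<subseteq> ?N" by blast
      have fw: "finite w" using finite_subset[OF wN] by simp
      have c1: "card w \<noteq> 1"
      proof
        assume "card w = 1"
        then obtain e where "w = {e}" using card_1_singletonE by blast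
        thus False using w by blast
      qed
      have c2: "card w \<noteq> n - 1"
      proof
        assume cw: "card w = n - 1"
        have "card (?N - w) = 1" using card_Diff_subset[OF fw wN] cw n3 by simp
        then obtain e where e: "?N - w = {e}" using card_1_singletonE by blast
        hence "e \<in> ?N" by blast
        moreover have "w = ?N - {e}" using e wN by blast
        ultimately show False using w by blast
      qed
      show "?F w = 0" using fz w c1 c2 by simp
    qed
  qed
  also have "\<dots> = (\<Sum>w\<in>?W1. ?F w) + (\<Sum>w\<in>?W2. ?F w)"
  proof (rule sum.union_disjoint)
    show "finite ?W1" "finite ?W2" by simp_all
    show "?W1 \<inter> ?W2 = {}"
    proof (rule ccontr)
      assume "?W1 \<inter> ?W2 \<noteq> {}"
      then obtain e e' where ee: "e' \<in> ?N" "{e} = ?N - {e'}" by blast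
      hence "card {e} = card (?N - {e'})" by simp
      thus False using ee(1) n3 by simp
    qed
  qed
  also have "(\<Sum>w\<in>?W1. ?F w) = (\<Sum>e\<in>?N. ?F {e})"
    by (rule sum.reindex_cong[where l = "\<lambda>e. {e}"]) (auto simp: inj_on_def)
  also have "(\<Sum>w\<in>?W2. ?F w) = (\<Sum>e\<in>?N. ?F (?N - {e}))"
    by (rule sum.reindex_cong[where l = "\<lambda>e. ?N - {e}"]) (auto simp: inj_on_def)
  also have "\<dots> = (\<Sum>e\<in>?N. ?F {e})"
  proof (rule sum.cong[OF refl])
    fix e assume e: "e \<in> ?N"
    show "?F (?N - {e}) = ?F {e}"
      using fh_co_single[OF g0 e] chi_co_single[OF u e] by simp
  qed
  finally show ?thesis by simp
qed

lemma card_sd_le: "finite A \<Longrightarrow> finite B \<Longrightarrow> card (sd A B) \<le> card A + card B"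
proof -
  assume "finite A" "finite B"
  moreover have "sd A B \<subseteq> A \<union> B" unfolding sd_def by blast
  ultimately have "card (sd A B) \<le> card (A \<union> B)" by (intro card_mono) auto
  also have "\<dots> \<le> card A + card B" by (rule card_Un_le)
  finally show ?thesis .
qed

lemma expand_sq:
  assumes n5: "n \<ge> 5" and rep: "\<forall>u\<in>even_cube n. g u = (\<Sum>e\<in>{..<n}. a e * chi {e} u)"
    and sq: "\<forall>u\<in>even_cube n. (g u)^2 = 1"
    and z: "z \<subseteq> {..<n}" "card z \<le> 2"
  shows "(\<Sum>u\<in>even_cube n. chi z u) = 2 ^ (n - 1) * (\<Sum>d\<in>{..<n}. \<Sum>d'\<in>{..<n}. a d * a d' * (if sd (sd {d} {d'}) z = {} then 1 else 0))"
proof -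
  let ?N = "{..<n}"
  let ?Z = "\<lambda>d d'. sd (sd {d} {d'}) z"
  have fz: "finite z" using finite_subset[OF z(1)] by simp
  have "(\<Sum>u\<in>even_cube n. chi z u) = (\<Sum>u\<in>even_cube n. (g u)^2 * chi z u)"
    using sq by simp
  also have "\<dots> = (\<Sum>u\<in>even_cube n. \<Sum>d\<in>?N. \<Sum>d'\<in>?N. a d * a d' * chi (?Z d d') u)"
  proof (rule sum.cong[OF refl])
    fix u assume u: "u \<in> even_cube n"
    have "u \<subseteq> ?N" using u unfolding even_cube_def by blast
    hence fu: "finite u" using finite_subset by blast
    have "(g u)^2 = (\<Sum>d\<in>?N. \<Sum>d'\<in>?N. (a d * chi {d} u) * (a d' * chi {d'} u))"
      using rep u by (simp add: power2_eq_square sum_product)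
    hence "(g u)^2 * chi z u = (\<Sum>d\<in>?N. \<Sum>d'\<in>?N. (a d * chi {d} u) * (a d' * chi {d'} u) * chi z u)"
      by (simp add: sum_distrib_right)
    also have "\<dots> = (\<Sum>d\<in>?N. \<Sum>d'\<in>?N. a d * a d' * chi (?Z d d') u)"
      by (rule sum.cong[OF refl], rule sum.cong[OF refl]) (simp add: chi_sd2[OF fu] mult_ac)
    finally show "(g u)^2 * chi z u = (\<Sum>d\<in>?N. \<Sum>d'\<in>?N. a d * a d' * chi (?Z d d') u)" .
  qed
  also have "\<dots> = (\<Sum>d\<in>?N. \<Sum>u\<in>even_cube n. \<Sum>d'\<in>?N. a d * a d' * chi (?Z d d') u)" by (rule sum.swap)
  also have "\<dots> = (\<Sum>d\<in>?N. \<Sum>d'\<in>?N. \<Sum>u\<in>even_cube n. a d * a d' * chi (?Z d d') u)"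
    by (rule sum.cong[OF refl], rule sum.swap)
  also have "\<dots> = (\<Sum>d\<in>?N. \<Sum>d'\<in>?N. a d * a d' * (if ?Z d d' = {} then 2 ^ (n - 1) else 0))"
  proof (rule sum.cong[OF refl], rule sum.cong[OF refl])
    fix d d' assume d: "d \<in> ?N" and d': "d' \<in> ?N"
    have ZN: "?Z d d' \<subseteq> ?N" using d d' z(1) unfolding sd_def by blast
    have "card (?Z d d') \<le> card (sd {d} {d'}) + card z" by (rule card_sd_le) (simp_all add: sd_def fz)
    also have "card (sd {d} {d'}) \<le> card {d} + card {d'}" by (rule card_sd_le) simp_all
    finally have "card (?Z d d') \<le> 4" using z(2) by simp
    have "?Z d d' \<noteq> ?N"
    proof
      assume "?Z d d' = ?N"
      hence "card (?Z d d') = n" by simp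
      thus False using \<open>card (?Z d d') \<le> 4\<close> n5 by simp
    qed
    hence "(\<Sum>u\<in>even_cube n. chi (?Z d d') u) = (if ?Z d d' = {} then 2 ^ (n - 1) else 0)"
      using EvSum[OF _ ZN] n5 by simp
    thus "(\<Sum>u\<in>even_cube n. a d * a d' * chi (?Z d d') u) = a d * a d' * (if ?Z d d' = {} then 2 ^ (n - 1) else 0)"
      by (simp add: sum_distrib_left[symmetric])
  qed
  also have "\<dots> = (\<Sum>d\<in>?N. \<Sum>d'\<in>?N. 2 ^ (n - 1) * (a d * a d' * (if ?Z d d' = {} then 1 else 0)))"
    by (rule sum.cong[OF refl], rule sum.cong[OF refl]) simp
  also have "\<dots> = 2 ^ (n - 1) * (\<Sum>d\<in>?N. \<Sum>d'\<in>?N. a d * a d' * (if ?Z d d' = {} then 1 else 0))"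
    by (simp only: sum_distrib_left)
  finally show ?thesis .
qed

lemma sd_single_cond:
  assumes "e \<noteq> e'"
  shows "(sd (sd {d} {d'}) {e, e'} = {}) = ((d = e \<and> d' = e') \<or> (d = e' \<and> d' = e))"
  using assms unfolding sd_def by blast

lemma single:
  assumes n5: "n \<ge> 5" and rep: "\<forall>u\<in>even_cube n. g u = (\<Sum>e\<in>{..<n}. a e * chi {e} u)"
    and sq: "\<forall>u\<in>even_cube n. (g u)^2 = 1"
  shows "\<exists>e\<in>{..<n}. a e \<noteq> 0 \<and> (\<forall>u\<in>even_cube n. g u = a e * chi {e} u)"
proof -
  let ?N = "{..<n}"
  have pos: "(2::real) ^ (n - 1) \<noteq> 0" by simp
  have sum1: "(\<Sum>d\<in>?N. a d * a d) = 1"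
  proof -
    have "(\<Sum>u\<in>even_cube n. chi {} u) = 2 ^ (n - 1)" using EvSum[of n "{}"] n5 by simp
    hence "2 ^ (n - 1) = 2 ^ (n - 1) * (\<Sum>d\<in>?N. \<Sum>d'\<in>?N. a d * a d' * (if sd (sd {d} {d'}) {} = {} then 1 else 0))"
      using expand_sq[OF n5 rep sq, of "{}"] by simp
    also have "(\<Sum>d\<in>?N. \<Sum>d'\<in>?N. a d * a d' * (if sd (sd {d} {d'}) {} = {} then 1 else 0)) = (\<Sum>d\<in>?N. a d * a d)"
    proof (rule sum.cong[OF refl])
      fix d assume d: "d \<in> ?N"
      have "(\<Sum>d'\<in>?N. a d * a d' * (if sd (sd {d} {d'}) {} = {} then 1 else 0)) = (\<Sum>d'\<in>?N. if d' = d then a d * a d' else 0)"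
        by (rule sum.cong[OF refl]) (auto simp: sd_def)
      also have "\<dots> = a d * a d" using d by simp
      finally show "(\<Sum>d'\<in>?N. a d * a d' * (if sd (sd {d} {d'}) {} = {} then 1 else 0)) = a d * a d" .
    qed
    finally show ?thesis using pos by simp
  qed
  have prod0: "a e * a e' = 0" if e: "e \<in> ?N" and e': "e' \<in> ?N" and ne: "e \<noteq> e'" for e e'
  proof -
    have zN: "{e, e'} \<subseteq> ?N" using e e' by blast
    have c2: "card {e, e'} = 2" using ne by simp
    have "{e, e'} \<noteq> ?N"
    proof
      assume "{e, e'} = ?N"
      hence "card {e, e'} = n" by simp
      thus False using c2 n5 by simp
    qed
    hence "(\<Sum>u\<in>even_cube n. chi {e, e'} u) = 0" using EvSum[OF _ zN] n5 by simp
    hence "0 = 2 ^ (n - 1) * (\<Sum>d\<in>?N. \<Sum>d'\<in>?N. a d * a d' * (if sd (sd {d} {d'}) {e, e'} = {} then 1 else 0))"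
      using expand_sq[OF n5 rep sq zN] c2 by simp
    also have "(\<Sum>d\<in>?N. \<Sum>d'\<in>?N. a d * a d' * (if sd (sd {d} {d'}) {e, e'} = {} then 1 else 0))
        = (\<Sum>d\<in>?N. (if d = e then a e * a e' else 0) + (if d = e' then a e' * a e else 0))"
    proof (rule sum.cong[OF refl])
      fix d assume d: "d \<in> ?N"
      show "(\<Sum>d'\<in>?N. a d * a d' * (if sd (sd {d} {d'}) {e, e'} = {} then 1 else 0))
        = (if d = e then a e * a e' else 0) + (if d = e' then a e' * a e else 0)"
      proof (cases "d = e")
        case True
        have "(\<Sum>d'\<in>?N. a d * a d' * (if sd (sd {d} {d'}) {e, e'} = {} then 1 else 0)) = (\<Sum>d'\<in>?N. if d' = e' then a e * a d' else 0)"
          by (rule sum.cong[OF refl]) (use True ne in \<open>simp add: sd_single_cond[OF ne]\<close>)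
        thus ?thesis using True ne e' by simp
      next
        case dne: False
        show ?thesis
        proof (cases "d = e'")
          case True
          have "(\<Sum>d'\<in>?N. a d * a d' * (if sd (sd {d} {d'}) {e, e'} = {} then 1 else 0)) = (\<Sum>d'\<in>?N. if d' = e then a e' * a d' else 0)"
            by (rule sum.cong[OF refl]) (use True ne in \<open>simp add: sd_single_cond[OF ne]\<close>)
          thus ?thesis using True ne e dne by simp
        next
          case False
          have "(\<Sum>d'\<in>?N. a d * a d' * (if sd (sd {d} {d'}) {e, e'} = {} then 1 else 0)) = (\<Sum>d'\<in>?N. 0)"
            by (rule sum.cong[OF refl]) (use False dne in \<open>simp add: sd_single_cond[OF ne]\<close>)
          thus ?thesis using False dne by simp
        qed
      qed
    qed
    also have "\<dots> = a e * a e' + a e' * a e" using e e' by (simp add: sum.distrib)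
    finally show ?thesis using pos by auto
  qed
  obtain e where e: "e \<in> ?N" and ae: "a e \<noteq> 0"
  proof (rule ccontr)
    assume "\<not> thesis"
    hence "\<forall>e\<in>?N. a e = 0" using that by blast
    hence "(\<Sum>d\<in>?N. a d * a d) = 0" by simp
    thus False using sum1 by simp
  qed
  have others: "a d = 0" if "d \<in> ?N" "d \<noteq> e" for d
    using prod0[OF e that(1)] that(2) ae by auto
  have "\<forall>u\<in>even_cube n. g u = a e * chi {e} u"
  proof
    fix u assume u: "u \<in> even_cube n"
    have "g u = (\<Sum>d\<in>?N. a d * chi {d} u)" using rep u by simp
    also have "\<dots> = (\<Sum>d\<in>?N. if d = e then a e * chi {e} u else 0)"
      by (rule sum.cong[OF refl]) (use others in auto)
    also have "\<dots> = a e * chi {e} u" using e by simp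
    finally show "g u = a e * chi {e} u" .
  qed
  thus ?thesis using e ae by blast
qed


lemma hamming_sd: "hamming x y = card (sd x y)"
  unfolding hamming_def sd_def by simp

lemma sd_even:
  assumes u: "u \<in> even_cube n" and s: "s \<subseteq> {..<n}" "even (card s)"
  shows "sd u s \<in> even_cube n"
proof -
  have uN: "u \<subseteq> {..<n}" and eu: "even (card u)" using u unfolding even_cube_def by auto
  have fu: "finite u" using finite_subset[OF uN] by simp
  have fs: "finite s" using finite_subset[OF s(1)] by simp
  have "card u + card s = card (sd u s) + 2 * card (u \<inter> s)" by (rule card_sd_parity[OF fu fs])
  hence "even (card (sd u s))" using eu s(2) by presburger
  moreover have "sd u s \<subseteq> {..<n}" using uN s(1) by (rule sd_subset)
  ultimately show ?thesis unfolding even_cube_def by blast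
qed

lemma sum_sign:
  assumes "finite N" "D \<subseteq> N"
  shows "(\<Sum>c\<in>N. if c \<in> D then -1 else (1::real)) = real (card N) - 2 * real (card D)"
proof -
  have "(\<Sum>c\<in>N. if c \<in> D then -1 else (1::real)) = (\<Sum>c\<in>N \<inter> {c. c \<in> D}. -1) + (\<Sum>c\<in>N \<inter> - {c. c \<in> D}. 1)"
    by (rule sum.If_cases[OF assms(1)])
  also have "N \<inter> {c. c \<in> D} = D" using assms(2) by blast
  also have "N \<inter> - {c. c \<in> D} = N - D" by blast
  finally have e: "(\<Sum>c\<in>N. if c \<in> D then -1 else (1::real)) = - real (card D) + real (card (N - D))" by simp
  have "card (N - D) = card N - card D" using card_Diff_subset[OF finite_subset[OF assms(2) assms(1)] assms(2)] .
  moreover have "card D \<le> card N" using card_mono[OF assms] .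
  ultimately show ?thesis using e by (simp add: of_nat_diff)
qed

lemma main_inj:
  fixes n k :: nat and E :: "nat set \<Rightarrow> nat set \<Rightarrow> bool" and f :: "nat set \<Rightarrow> nat set"
  assumes ev: "even k" and nk: "n + 2 \<le> 2 * k" and kn: "k \<le> n - 1"
    and H: "\<forall>x\<in>even_cube n. \<forall>y\<in>even_cube n. hamming x y = k \<longrightarrow> E x y"
    and H': "\<forall>x\<in>even_cube n. \<forall>y\<in>even_cube n. E x y \<longrightarrow> hamming x y \<ge> k"
    and hom: "graph_hom (even_cube n) E (even_cube n) E f"
  shows "inj_on f (even_cube n)"
proof -
  let ?N = "{..<n}"
  let ?Ev = "even_cube n"
  let ?S = "{s. s \<subseteq> ?N \<and> card s = k}"
  let ?K = "real (n choose k) * (real n - 2 * real k)"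
  have n4: "n \<ge> 4" using nk kn by linarith
  have n5: "n \<ge> 5"
  proof (rule ccontr)
    assume "\<not> n \<ge> 5"
    hence "n = 4" using n4 by simp
    hence "k = 3" using nk kn by simp
    thus False using ev by simp
  qed
  have k1: "k \<ge> 1" using nk by linarith
  have EvP: "?Ev \<subseteq> Pow ?N" unfolding even_cube_def by blast
  have fmap: "f u \<in> ?Ev" if "u \<in> ?Ev" for u using hom that unfolding graph_hom_def by blast
  have fN: "f u \<subseteq> ?N" if "u \<in> ?Ev" for u using fmap[OF that] unfolding even_cube_def by blast
  have finS: "finite ?S" by (rule subsets_card_finite) simp
  have cS: "card ?S = n choose k" using n_subsets[of ?N k] by simp
  have sdS: "sd u s \<in> ?Ev" if "u \<in> ?Ev" "s \<in> ?S" for u s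
    using sd_even[OF that(1)] that(2) ev by simp
  define g where "g c u = (if u \<in> ?Ev then (if c \<in> f u then -1 else 1) else (0::real))" for c u
  define Q where "Q c = (\<Sum>u\<in>Pow ?N. \<Sum>s\<in>?S. g c u * g c (sd u s))" for c
  have gsq: "(g c u)^2 = 1" if "u \<in> ?Ev" for c u using that unfolding g_def by simp
  have g0: "\<forall>u\<in>Pow ?N. u \<notin> ?Ev \<longrightarrow> g c u = 0" for c unfolding g_def by simp
  have sqsum: "(\<Sum>u\<in>Pow ?N. (g c u)^2) = real (card ?Ev)" for c
  proof -
    have "(\<Sum>u\<in>Pow ?N. (g c u)^2) = (\<Sum>u\<in>Pow ?N. if u \<in> ?Ev then 1 else 0)"
      by (rule sum.cong[OF refl]) (simp add: g_def)
    also have "\<dots> = (\<Sum>u\<in>{u \<in> Pow ?N. u \<in> ?Ev}. 1)" by (rule sum.inter_filter[symmetric]) simp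
    also have "{u \<in> Pow ?N. u \<in> ?Ev} = ?Ev" using EvP by blast
    finally show ?thesis by simp
  qed
  have lower: "real n * Q c \<ge> ?K * real (card ?Ev)" for c
    using spec_ge[OF ev nk kn, of "g c"] sqsum[of c] unfolding Q_def by simp
  have gprod: "(\<Sum>c\<in>?N. g c u * g c v) = real n - 2 * real (hamming (f u) (f v))"
    if "u \<in> ?Ev" "v \<in> ?Ev" for u v
  proof -
    have "(\<Sum>c\<in>?N. g c u * g c v) = (\<Sum>c\<in>?N. if c \<in> sd (f u) (f v) then -1 else 1)"
      by (rule sum.cong[OF refl]) (use that in \<open>auto simp: g_def sd_def\<close>)
    also have "\<dots> = real (card ?N) - 2 * real (card (sd (f u) (f v)))"
      by (rule sum_sign) (use fN[OF that(1)] fN[OF that(2)] in \<open>auto simp: sd_def\<close>)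
    finally show ?thesis by (simp add: hamming_sd)
  qed
  have Qsum: "(\<Sum>c\<in>?N. Q c) = (\<Sum>u\<in>?Ev. \<Sum>s\<in>?S. real n - 2 * real (hamming (f u) (f (sd u s))))"
  proof -
    have "Q c = (\<Sum>u\<in>?Ev. \<Sum>s\<in>?S. g c u * g c (sd u s))" for c
      unfolding Q_def by (rule sum.mono_neutral_right) (use EvP in \<open>auto simp: g_def\<close>)
    hence "(\<Sum>c\<in>?N. Q c) = (\<Sum>c\<in>?N. \<Sum>u\<in>?Ev. \<Sum>s\<in>?S. g c u * g c (sd u s))" by simp
    also have "\<dots> = (\<Sum>u\<in>?Ev. \<Sum>c\<in>?N. \<Sum>s\<in>?S. g c u * g c (sd u s))" by (rule sum.swap)
    also have "\<dots> = (\<Sum>u\<in>?Ev. \<Sum>s\<in>?S. \<Sum>c\<in>?N. g c u * g c (sd u s))"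
      by (rule sum.cong[OF refl], rule sum.swap)
    also have "\<dots> = (\<Sum>u\<in>?Ev. \<Sum>s\<in>?S. real n - 2 * real (hamming (f u) (f (sd u s))))"
      by (rule sum.cong[OF refl], rule sum.cong[OF refl]) (use gprod sdS in blast)
    finally show ?thesis .
  qed
  have term_le: "real n - 2 * real (hamming (f u) (f (sd u s))) \<le> real n - 2 * real k"
    if "u \<in> ?Ev" "s \<in> ?S" for u s
  proof -
    have "hamming u (sd u s) = k" using that(2) by (simp add: hamming_sd sd_self_left)
    hence "E u (sd u s)" using H that(1) sdS[OF that] by blast
    hence "E (f u) (f (sd u s))" using hom that(1) sdS[OF that] unfolding graph_hom_def by blast
    hence "hamming (f u) (f (sd u s)) \<ge> k" using H' fmap[OF that(1)] fmap[OF sdS[OF that]] by blast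
    thus ?thesis by simp
  qed
  let ?T = "\<lambda>u s. real n - 2 * real (hamming (f u) (f (sd u s)))"
  have const: "(\<Sum>u\<in>?Ev. \<Sum>s\<in>?S. real n - 2 * real k) = real (card ?Ev) * ?K"
    using cS by simp
  have upper: "(\<Sum>c\<in>?N. Q c) \<le> real (card ?Ev) * ?K"
    unfolding Qsum const[symmetric] by (intro sum_mono) (use term_le in blast)
  have "real n * (\<Sum>c\<in>?N. Q c) = (\<Sum>c\<in>?N. real n * Q c)" by (simp add: sum_distrib_left)
  also have "\<dots> \<ge> (\<Sum>c\<in>?N. ?K * real (card ?Ev))" by (intro sum_mono lower)
  finally have "real n * (\<Sum>c\<in>?N. Q c) \<ge> real n * (?K * real (card ?Ev))" by simp
  hence lowsum: "(\<Sum>c\<in>?N. Q c) \<ge> ?K * real (card ?Ev)" using n5 by (simp add: mult_le_cancel_left_pos)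
  have Qeq: "real n * Q c = ?K * real (card ?Ev)" if c: "c \<in> ?N" for c
  proof -
    have "(\<Sum>c\<in>?N. real n * Q c - ?K * real (card ?Ev)) = real n * (\<Sum>c\<in>?N. Q c) - real n * (?K * real (card ?Ev))"
      by (simp add: sum_subtractf sum_distrib_left)
    also have "\<dots> = 0" using upper lowsum by (simp add: mult.commute)
    finally have "(\<Sum>c\<in>?N. real n * Q c - ?K * real (card ?Ev)) = 0" .
    moreover have "\<forall>c\<in>?N. 0 \<le> real n * Q c - ?K * real (card ?Ev)" using lower by simp
    ultimately have "\<forall>c\<in>?N. real n * Q c - ?K * real (card ?Ev) = 0"
      using sum_nonneg_eq_0_iff[of ?N "\<lambda>c. real n * Q c - ?K * real (card ?Ev)"] by simp
    thus ?thesis using c by simp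
  qed
  have tight: "hamming (f u) (f (sd u s)) = k" if us: "u \<in> ?Ev" "s \<in> ?S" for u s
  proof -
    have "(\<Sum>u\<in>?Ev. \<Sum>s\<in>?S. (real n - 2 * real k) - ?T u s) = real (card ?Ev) * ?K - (\<Sum>c\<in>?N. Q c)"
      unfolding Qsum const[symmetric] by (simp add: sum_subtractf right_diff_distrib)
    also have "\<dots> = 0" using upper lowsum by (simp add: mult.commute)
    finally have z: "(\<Sum>u\<in>?Ev. \<Sum>s\<in>?S. (real n - 2 * real k) - ?T u s) = 0" .
    have nn: "\<forall>u\<in>?Ev. 0 \<le> (\<Sum>s\<in>?S. (real n - 2 * real k) - ?T u s)"
      using term_le by (auto intro!: sum_nonneg)
    have "(\<Sum>s\<in>?S. (real n - 2 * real k) - ?T u s) = 0"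
    proof -
      have fE: "finite ?Ev" using finite_subset[OF EvP] by simp
      have iff: "((\<Sum>u\<in>?Ev. \<Sum>s\<in>?S. (real n - 2 * real k) - ?T u s) = 0) = (\<forall>u\<in>?Ev. (\<Sum>s\<in>?S. (real n - 2 * real k) - ?T u s) = 0)"
        by (rule sum_nonneg_eq_0_iff[OF fE]) (use nn in simp)
      have "\<forall>u\<in>?Ev. (\<Sum>s\<in>?S. (real n - 2 * real k) - ?T u s) = 0" using iff z by simp
      thus ?thesis using us(1) by simp
    qed
    moreover have iff2: "((\<Sum>s\<in>?S. (real n - 2 * real k) - ?T u s) = 0) = (\<forall>s\<in>?S. (real n - 2 * real k) - ?T u s = 0)"
      by (rule sum_nonneg_eq_0_iff[OF finS]) (use term_le us(1) in simp)
    ultimately have "\<forall>s\<in>?S. (real n - 2 * real k) - ?T u s = 0" by simp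
    hence "(real n - 2 * real k) - ?T u s = 0" using us(2) by blast
    thus ?thesis by simp
  qed
  have charform: "\<exists>e. e \<in> ?N \<and> (\<exists>\<sigma>. \<sigma> \<noteq> 0 \<and> (\<forall>u\<in>?Ev. g c u = \<sigma> * chi {e} u))" if c: "c \<in> ?N" for c
  proof -
    have eq: "real n * (\<Sum>u\<in>Pow ?N. \<Sum>s\<in>?S. g c u * g c (sd u s)) = ?K * (\<Sum>u\<in>Pow ?N. (g c u)^2)"
      using Qeq[OF c] sqsum[of c] unfolding Q_def by simp
    have fz: "\<forall>w\<in>Pow ?N. card w \<noteq> 1 \<and> card w \<noteq> n - 1 \<longrightarrow> fh ?N (g c) w = 0"
      using spec_eq[OF ev nk kn eq] by blast
    have rep: "\<forall>u\<in>?Ev. g c u = (\<Sum>e\<in>?N. (fh ?N (g c) {e} / 2 ^ (n - 1)) * chi {e} u)"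
    proof
      fix u assume u: "u \<in> ?Ev"
      have r: "2 ^ n * g c u = 2 * (\<Sum>e\<in>?N. fh ?N (g c) {e} * chi {e} u)"
        using repr[OF _ g0 fz u] n5 by simp
      have p: "(2::real) ^ n = 2 * 2 ^ (n - 1)" using n5 by (simp add: power_eq_if)
      have "g c u = (\<Sum>e\<in>?N. fh ?N (g c) {e} * chi {e} u) / 2 ^ (n - 1)"
        using r unfolding p by (simp add: field_simps)
      thus "g c u = (\<Sum>e\<in>?N. (fh ?N (g c) {e} / 2 ^ (n - 1)) * chi {e} u)"
        by (simp add: sum_divide_distrib)
    qed
    have sq: "\<forall>u\<in>?Ev. (g c u)^2 = 1" using gsq by blast
    from single[OF n5 rep sq] show ?thesis by blast
  qed
  obtain \<pi> where \<pi>: "\<forall>c\<in>?N. \<pi> c \<in> ?N \<and> (\<exists>\<sigma>. \<sigma> \<noteq> 0 \<and> (\<forall>u\<in>?Ev. g c u = \<sigma> * chi {\<pi> c} u))"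
    using bchoice[of ?N "\<lambda>c e. e \<in> ?N \<and> (\<exists>\<sigma>. \<sigma> \<noteq> 0 \<and> (\<forall>u\<in>?Ev. g c u = \<sigma> * chi {e} u))"] charform
    by blast
  have key: "(c \<in> sd (f u) (f v)) = (\<pi> c \<in> sd u v)" if c: "c \<in> ?N" and u: "u \<in> ?Ev" and v: "v \<in> ?Ev" for c u v
  proof -
    obtain \<sigma> where \<sigma>: "\<sigma> \<noteq> 0" "\<forall>u\<in>?Ev. g c u = \<sigma> * chi {\<pi> c} u" using \<pi> c by blast
    have fu: "finite u" using u unfolding even_cube_def using finite_subset by blast
    have fv: "finite v" using v unfolding even_cube_def using finite_subset by blast
    have "1 = (g c u)^2" using gsq[OF u] by simp
    also have "\<dots> = \<sigma> * \<sigma> * (chi {\<pi> c} u * chi {\<pi> c} u)" using \<sigma>(2) u by (simp add: power2_eq_square mult_ac)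
    finally have ss: "\<sigma> * \<sigma> = 1" by (simp add: chi_sq)
    have "g c u * g c v = \<sigma> * \<sigma> * (chi {\<pi> c} u * chi {\<pi> c} v)" using \<sigma>(2) u v by (simp add: mult_ac)
    also have "\<dots> = chi {\<pi> c} (sd u v)" using ss chi_sd[OF fu fv] by simp
    also have "\<dots> = (if \<pi> c \<in> sd u v then -1 else 1)" unfolding chi_def by auto
    finally have A: "g c u * g c v = (if \<pi> c \<in> sd u v then -1 else 1)" .
    have B: "g c u * g c v = (if c \<in> sd (f u) (f v) then -1 else 1)"
      using u v by (auto simp: g_def sd_def)
    show ?thesis using A B by (auto split: if_splits)
  qed
  have Ev0: "{} \<in> ?Ev" unfolding even_cube_def by simp
  have cnt: "card {c \<in> ?N. \<pi> c \<in> s} = k" if s: "s \<in> ?S" for s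
  proof -
    have sEv: "s \<in> ?Ev" using s ev unfolding even_cube_def by simp
    have sd0: "sd {} s = s" unfolding sd_def by blast
    have h: "hamming (f {}) (f s) = k" using tight[OF Ev0 s] sd0 by simp
    have "{c \<in> ?N. \<pi> c \<in> s} = sd (f {}) (f s)"
    proof (rule set_eqI)
      fix c
      show "(c \<in> {c \<in> ?N. \<pi> c \<in> s}) = (c \<in> sd (f {}) (f s))"
      proof (cases "c \<in> ?N")
        case True thus ?thesis using key[OF True Ev0 sEv] sd0 by simp
      next
        case False
        have "sd (f {}) (f s) \<subseteq> ?N" using fN[OF Ev0] fN[OF sEv] by (rule sd_subset)
        thus ?thesis using False by blast
      qed
    qed
    thus ?thesis using h by (simp add: hamming_sd)
  qed
  have heq: "card {c \<in> ?N. \<pi> c = e} = card {c \<in> ?N. \<pi> c = e'}"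
    if e: "e \<in> ?N" and e': "e' \<in> ?N" and ne: "e \<noteq> e'" for e e'
  proof -
    have sub: "{e, e'} \<subseteq> ?N" using e e' by blast
    have "card (?N - {e, e'}) = card ?N - card {e, e'}" by (rule card_Diff_subset[OF _ sub]) simp
    hence "card (?N - {e, e'}) = n - 2" using ne by simp
    hence "k - 1 \<le> card (?N - {e, e'})" using kn by simp
    then obtain s0 where s0: "s0 \<subseteq> ?N - {e, e'}" "card s0 = k - 1" and fs0: "finite s0"
      by (rule obtain_subset_with_card_n)
    have split: "card {c \<in> ?N. \<pi> c \<in> insert x s0} = card {c \<in> ?N. \<pi> c = x} + card {c \<in> ?N. \<pi> c \<in> s0}"
      if x: "x \<in> ?N" "x \<notin> s0" for x
    proof -
      have "{c \<in> ?N. \<pi> c \<in> insert x s0} = {c \<in> ?N. \<pi> c = x} \<union> {c \<in> ?N. \<pi> c \<in> s0}" by blast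
      moreover have "{c \<in> ?N. \<pi> c = x} \<inter> {c \<in> ?N. \<pi> c \<in> s0} = {}" using x(2) by blast
      ultimately show ?thesis by (simp add: card_Un_disjoint)
    qed
    have inS: "insert x s0 \<in> ?S" if x: "x \<in> ?N" "x \<notin> s0" for x
    proof -
      have "card (insert x s0) = Suc (k - 1)" using fs0 x(2) s0(2) by simp
      hence "card (insert x s0) = k" using k1 by simp
      moreover have "insert x s0 \<subseteq> ?N" using x(1) s0(1) by blast
      ultimately show ?thesis by blast
    qed
    have "e \<notin> s0" "e' \<notin> s0" using s0(1) by blast+
    hence "card {c \<in> ?N. \<pi> c = e} + card {c \<in> ?N. \<pi> c \<in> s0} = card {c \<in> ?N. \<pi> c = e'} + card {c \<in> ?N. \<pi> c \<in> s0}"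
      using split[OF e] split[OF e'] cnt[OF inS[OF e]] cnt[OF inS[OF e']] by simp
    thus ?thesis by simp
  qed
  have surj: "\<exists>c\<in>?N. \<pi> c = e" if e0: "e \<in> ?N" for e
  proof (rule ccontr)
    assume no: "\<not> (\<exists>c\<in>?N. \<pi> c = e)"
    have z0: "0 \<in> ?N" using n5 by simp
    have e1: "\<pi> 0 \<in> ?N" using \<pi> z0 by blast
    have ne: "\<pi> 0 \<noteq> e" using no z0 by blast
    have "{c \<in> ?N. \<pi> c = e} = {}" using no by blast
    hence "card {c \<in> ?N. \<pi> c = \<pi> 0} = 0" using heq[OF e1 e0 ne] by simp
    moreover have "{c \<in> ?N. \<pi> c = \<pi> 0} \<noteq> {}" using z0 by blast
    moreover have "finite {c \<in> ?N. \<pi> c = \<pi> 0}" by simp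
    ultimately show False by simp
  qed
  show ?thesis
  proof (rule inj_onI)
    fix u v assume u: "u \<in> ?Ev" and v: "v \<in> ?Ev" and fuv: "f u = f v"
    show "u = v"
    proof (rule ccontr)
      assume "u \<noteq> v"
      then obtain e where e: "e \<in> sd u v" unfolding sd_def by blast
      have "sd u v \<subseteq> ?N" using u v unfolding even_cube_def by (auto simp: sd_def)
      hence "e \<in> ?N" using e by blast
      then obtain c where c: "c \<in> ?N" "\<pi> c = e" using surj by blast
      have "c \<in> sd (f u) (f v)" using key[OF c(1) u v] c(2) e by simp
      thus False using fuv unfolding sd_def by blast
    qed
  qed
qed


theorem corollary4p8:
  fixes n k :: nat and E :: "nat set \<Rightarrow> nat set \<Rightarrow> bool"
  assumes "n > 0" and "even k"
    and "real n / 2 + 1 \<le> real k" and "k \<le> n - 1"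
    and "is_graph (even_cube n) E"
    and "\<forall>x\<in>even_cube n. \<forall>y\<in>even_cube n. hamming x y = k \<longrightarrow> E x y"
    and "\<forall>x\<in>even_cube n. \<forall>y\<in>even_cube n. E x y \<longrightarrow> hamming x y \<ge> k"
  shows "is_core (even_cube n) E"
  unfolding is_core_def
proof (intro allI impI)
  fix f assume hom: "graph_hom (even_cube n) E (even_cube n) E f"
  let ?Ev = "even_cube n"
  have "real n + 2 \<le> 2 * real k" using assms(3) by simp
  hence nk: "n + 2 \<le> 2 * k" by linarith
  have inj: "inj_on f ?Ev" by (rule main_inj[OF assms(2) nk assms(4) assms(6) assms(7) hom])
  have EvP: "?Ev \<subseteq> Pow {..<n}" unfolding even_cube_def by blast
  have finE: "finite ?Ev" by (rule finite_subset[OF EvP]) simp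
  have fmap: "f x \<in> ?Ev" if "x \<in> ?Ev" for x using hom that unfolding graph_hom_def by blast
  have fE: "E (f x) (f y)" if "x \<in> ?Ev" "y \<in> ?Ev" "E x y" for x y
    using hom that unfolding graph_hom_def by blast
  have img: "f ` ?Ev \<subseteq> ?Ev" using fmap by blast
  have bij: "bij_betw f ?Ev ?Ev" unfolding bij_betw_def using endo_inj_surj[OF finE img inj] inj by blast
  define P where "P = {p \<in> ?Ev \<times> ?Ev. E (fst p) (snd p)}"
  define F where "F p = (f (fst p), f (snd p))" for p
  have finP: "finite P"
  proof (rule finite_subset)
    show "P \<subseteq> ?Ev \<times> ?Ev" unfolding P_def by blast
    show "finite (?Ev \<times> ?Ev)" using finE by simp
  qed
  have imgP: "F ` P \<subseteq> P"
  proof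
    fix q assume "q \<in> F ` P"
    then obtain p where p: "p \<in> P" "q = F p" by blast
    have "fst p \<in> ?Ev" "snd p \<in> ?Ev" "E (fst p) (snd p)" using p(1) unfolding P_def by auto
    thus "q \<in> P" unfolding p(2) F_def P_def using fmap fE by simp
  qed
  have injP: "inj_on F P"
  proof (rule inj_onI)
    fix p q assume p: "p \<in> P" and q: "q \<in> P" and e: "F p = F q"
    have p1: "fst p \<in> ?Ev" "snd p \<in> ?Ev" using p unfolding P_def by auto
    have q1: "fst q \<in> ?Ev" "snd q \<in> ?Ev" using q unfolding P_def by auto
    have "f (fst p) = f (fst q)" "f (snd p) = f (snd q)" using e unfolding F_def by simp_all
    hence "fst p = fst q" "snd p = snd q" using inj_onD[OF inj] p1 q1 by blast+
    thus "p = q" by (simp add: prod_eq_iff)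
  qed
  have surjP: "F ` P = P" by (rule endo_inj_surj[OF finP imgP injP])
  have edges: "\<forall>x\<in>?Ev. \<forall>y\<in>?Ev. E x y \<longleftrightarrow> E (f x) (f y)"
  proof (intro ballI iffI)
    fix x y assume x: "x \<in> ?Ev" and y: "y \<in> ?Ev"
    { assume "E x y" thus "E (f x) (f y)" using fE x y by blast }
    { assume fe: "E (f x) (f y)"
      have "(f x, f y) \<in> P" unfolding P_def using fe fmap x y by simp
      hence "(f x, f y) \<in> F ` P" using surjP by simp
      then obtain p where p0: "(f x, f y) = F p" and pP: "p \<in> P" by (rule imageE)
      have p: "p \<in> P" "F p = (f x, f y)" using p0 pP by simp_all
      have p1: "fst p \<in> ?Ev" "snd p \<in> ?Ev" "E (fst p) (snd p)" using p(1) unfolding P_def by auto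
      have "f (fst p) = f x" "f (snd p) = f y" using p(2) unfolding F_def by simp_all
      hence "fst p = x" "snd p = y" using inj_onD[OF inj] p1 x y by blast+
      thus "E x y" using p1(3) by simp }
  qed
  show "graph_aut ?Ev E f" unfolding graph_aut_def using bij edges by blast
qed

end
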